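(* Let $n\ge 2$ and $m\in\mathbb{N}$. Let $$\mathrm{dom}(\mathcal{L})=\Big\{(d,b)\in\mathbb{R}^m\times\mathbb{R}^m:\ d_j>0,\ b_j>0,\ \sum_{j=1}^m b_j<1,\ \sigma_1<\sigma_2<\dots<\sigma_m\Big\},$$ where $\sigma_j=\kappa d_j^{n-2}/(4b_j)$ if $n>2$ and $\sigma_j=\pi d_j/(2b_j)$ if $n=2$, and let $\mathcal{L}(d,b)=(\sigma,\mu)$ with $\sigma=(\sigma_1,\dots,\sigma_m)$ and $\mu=(\mu_1,\dots,\mu_m)$, where $\mu_1<\dots<\mu_m$ are the roots of $$1+\sum_{j=1}^m\frac{\sigma_j b_j}{(1-\sum_{i=1}^m b_i)(\sigma_j-\lambda)}=0.$$ Then $\mathcal{L}$ is a bijection of $\mathrm{dom}(\mathcal{L})$ onto $$\mathcal{G}=\{(\sigma,\mu)\in\mathbb{R}^m\times\mathbb{R}^m:\ \sigma_j<\mu_j<\sigma_{j+1}\ (j=1,\dots,m-1),\ \sigma_m<\mu_m<\infty\}$$ (where also $\sigma_1>0$ for elements of the image), and the inverse is given by $$b_j=\frac{\rho_j}{1+\sum_{i=1}^m\rho_i},\qquad d_j=\begin{cases}\Big(\dfrac{4\sigma_j\rho_j}{\kappa(1+\sum_{i=1}^m\rho_i)}\Big)^{1/(n-2)},&n>2,\\[2mm] \dfrac{2\sigma_j\rho_j}{\pi(1+\sum_{i=1}^m\rho_i)},&n=2,\end{cases}$$ where $$\rho_j=\frac{\mu_j-\sigma_j}{\sigma_j}\prod_{i\in\{1,\dots,m\},\,i\ne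 j}\frac{\mu_i-\sigma_j}{\sigma_i-\sigma_j}.$$
   Context: For $n>2$, $\kappa$ is the capacity of the disc $T=\{x\in\mathbb{R}^n:|x|<1,\ x_n=0\}$: $\kappa=\inf\int_{\mathbb{R}^n}|\nabla w|^2dx$ over smooth compactly supported $w$ with $w=1$ on $T$. When $0<\sigma_1<\dots<\sigma_m$ and $b_j>0$, $\sum b_j<1$, the displayed equation in $\lambda$ has exactly $m$ roots, all real, interlacing as $\sigma_j<\mu_j<\sigma_{j+1}$, $\sigma_m<\mu_m$. *)

theory Defs
  imports "HOL-Analysis.Analysis"
begin

definition partial_deriv :: "'n::finite \<Rightarrow> (real^'n \<Rightarrow> real) \<Rightarrow> real^'n \<Rightarrow> real" where
  "partial_deriv i f x = deriv (\<lambda>t. f (x + t *\<^sub>R axis i 1)) 0"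

fun iter_partial :: "'n::finite list \<Rightarrow> (real^'n \<Rightarrow> real) \<Rightarrow> real^'n \<Rightarrow> real" where
  "iter_partial [] f = f"
| "iter_partial (i # is) f = partial_deriv i (iter_partial is f)"

definition smooth_fun :: "(real^'n::finite \<Rightarrow> real) \<Rightarrow> bool" where
  "smooth_fun f \<longleftrightarrow> (\<forall>is. continuous_on UNIV (iter_partial is f) \<and>
      (\<forall>i x. (\<lambda>t. iter_partial is f (x + t *\<^sub>R axis i 1)) differentiable (at 0)))"

definition compact_support :: "(real^'n::finite \<Rightarrow> real) \<Rightarrow> bool" where
  "compact_support f \<longleftrightarrow> compact (closure {x. f x \<noteq> 0})"

text \<open>The disc T = {x : |x| < 1, x_n = 0}; the distinguished last coordinate is
  represented by a fixed (arbitrary) index of the finite index type.\<close>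
definition flat_disc :: "'n::finite itself \<Rightarrow> (real^'n) set" where
  "flat_disc _ = {x :: real^'n. norm x < 1 \<and> x $ (undefined :: 'n) = 0}"

definition disc_capacity :: "'n::finite itself \<Rightarrow> real" where
  "disc_capacity T = Inf {integral UNIV (\<lambda>x. \<Sum>i\<in>UNIV. (partial_deriv i w x)^2) | w :: real^'n \<Rightarrow> real.
       smooth_fun w \<and> compact_support w \<and> (\<forall>x \<in> flat_disc T. w x = 1)}"

section \<open>The map L (vectors in R^m as lists of length m, 0-based indices)\<close>

definition sigma_val :: "nat \<Rightarrow> real \<Rightarrow> real \<Rightarrow> real \<Rightarrow> real" where
  "sigma_val n \<kappa> d b = (if n > 2 then \<kappa> * d ^ (n - 2) / (4 * b) else pi * d / (2 * b))"

definition sigma_list :: "nat \<Rightarrow> real \<Rightarrow> real list \<Rightarrow> real list \<Rightarrow> real list" where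
  "sigma_list n \<kappa> ds bs = map2 (sigma_val n \<kappa>) ds bs"

definition secular :: "real list \<Rightarrow> real list \<Rightarrow> real \<Rightarrow> real" where
  "secular \<sigma> bs lam = 1 + (\<Sum>j<length \<sigma>. \<sigma> ! j * bs ! j / ((1 - sum_list bs) * (\<sigma> ! j - lam)))"

definition mu_list :: "real list \<Rightarrow> real list \<Rightarrow> real list" where
  "mu_list \<sigma> bs = sorted_list_of_set {lam. lam \<notin> set \<sigma> \<and> secular \<sigma> bs lam = 0}"

definition Lmap :: "nat \<Rightarrow> real \<Rightarrow> real list \<times> real list \<Rightarrow> real list \<times> real list" where
  "Lmap n \<kappa> p = (let \<sigma> = sigma_list n \<kappa> (fst p) (snd p) in (\<sigma>, mu_list \<sigma> (snd p)))"

definition domL :: "nat \<Rightarrow> real \<Rightarrow> nat \<Rightarrow> (real list \<times> real list) set" where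
  "domL n \<kappa> m = {(ds, bs). length ds = m \<and> length bs = m \<and>
      (\<forall>j<m. 0 < ds ! j \<and> 0 < bs ! j) \<and> sum_list bs < 1 \<and>
      sorted_wrt (<) (sigma_list n \<kappa> ds bs)}"

definition Gset :: "nat \<Rightarrow> (real list \<times> real list) set" where
  "Gset m = {(\<sigma>, \<mu>). length \<sigma> = m \<and> length \<mu> = m \<and>
      (\<forall>j. j + 1 < m \<longrightarrow> \<sigma> ! j < \<mu> ! j \<and> \<mu> ! j < \<sigma> ! (j + 1)) \<and>
      (0 < m \<longrightarrow> \<sigma> ! (m - 1) < \<mu> ! (m - 1) \<and> 0 < \<sigma> ! 0)}"

definition rho :: "real list \<Rightarrow> real list \<Rightarrow> nat \<Rightarrow> real" where
  "rho \<sigma> \<mu> j = (\<mu> ! j - \<sigma> ! j) / \<sigma> ! j *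
      (\<Prod>i\<in>{0..<length \<sigma>} - {j}. (\<mu> ! i - \<sigma> ! j) / (\<sigma> ! i - \<sigma> ! j))"

definition Linv :: "nat \<Rightarrow> real \<Rightarrow> real list \<times> real list \<Rightarrow> real list \<times> real list" where
  "Linv n \<kappa> p = (let \<sigma> = fst p; \<mu> = snd p; m = length \<sigma>;
      S = 1 + (\<Sum>i<m. rho \<sigma> \<mu> i) in
     (map (\<lambda>j. if n > 2 then (4 * \<sigma> ! j * rho \<sigma> \<mu> j / (\<kappa> * S)) powr (1 / real (n - 2))
               else 2 * \<sigma> ! j * rho \<sigma> \<mu> j / (pi * S)) [0..<m],
      map (\<lambda>j. rho \<sigma> \<mu> j / S) [0..<m]))"

end

theory Submission
  imports Defs "HOL-Computational_Algebra.Polynomial"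
begin


definition Pp :: "(nat \<Rightarrow> real) \<Rightarrow> nat set \<Rightarrow> real poly" where
  "Pp s A = (\<Prod>i\<in>A. [:s i, -1:])"

definition Fp :: "(nat \<Rightarrow> real) \<Rightarrow> (nat \<Rightarrow> real) \<Rightarrow> nat \<Rightarrow> real poly" where
  "Fp s c m = Pp s {..<m} + (\<Sum>j<m. smult (s j * c j) (Pp s ({..<m} - {j})))"

lemma poly_Pp: "poly (Pp s A) x = (\<Prod>i\<in>A. s i - x)"
  by (simp add: Pp_def poly_prod)

lemma degree_Pp: "finite A \<Longrightarrow> degree (Pp s A) = card A"
  unfolding Pp_def by (subst degree_prod_sum_eq) auto

lemma lead_Pp: "finite A \<Longrightarrow> coeff (Pp s A) (card A) = (-1) ^ card A"
  using lead_coeff_prod[of "\<lambda>i. [:s i, -1:]" A] degree_Pp[of A s]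
  by (simp add: Pp_def)

lemma degree_Fp: "degree (Fp s c m) \<le> m"
  unfolding Fp_def
proof (intro degree_add_le)
  show "degree (Pp s {..<m}) \<le> m" by (simp add: degree_Pp)
  show "degree (\<Sum>j<m. smult (s j * c j) (Pp s ({..<m} - {j}))) \<le> m"
    by (intro degree_sum_le) (auto intro: order.trans[OF degree_smult_le] simp: degree_Pp)
qed

lemma coeff_Fp: "coeff (Fp s c m) m = (-1) ^ m"
proof -
  have "coeff (\<Sum>j<m. smult (s j * c j) (Pp s ({..<m} - {j}))) m = 0"
  proof -
    have "\<forall>j<m. coeff (Pp s ({..<m} - {j})) m = 0"
    proof (intro allI impI)
      fix j assume "j < m"
      have "degree (Pp s ({..<m} - {j})) < m" using \<open>j<m\<close> by (simp add: degree_Pp)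
      thus "coeff (Pp s ({..<m} - {j})) m = 0"
        by (simp add: coeff_eq_0)
    qed
    thus ?thesis by (simp add: coeff_sum)
  qed
  thus ?thesis using lead_Pp[of "{..<m}" s] by (simp add: Fp_def)
qed

lemma Fp_nonzero: "Fp s c m \<noteq> 0"
  using coeff_Fp[of s c m] by auto

lemma poly_Fp: "poly (Fp s c m) x = (\<Prod>i<m. s i - x) + (\<Sum>j<m. s j * c j * (\<Prod>i\<in>{..<m}-{j}. s i - x))"
  by (simp add: Fp_def poly_Pp poly_sum)

lemma poly_Fp_at:
  assumes "k < m" "inj_on s {..<m}"
  shows "poly (Fp s c m) (s k) = s k * c k * (\<Prod>i\<in>{..<m}-{k}. s i - s k)"
proof -
  have z: "(\<Prod>i<m. s i - s k) = 0" using assms(1) by (intro prod_zero) auto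
  have "(\<Sum>j<m. s j * c j * (\<Prod>i\<in>{..<m}-{j}. s i - s k)) = s k * c k * (\<Prod>i\<in>{..<m}-{k}. s i - s k)"
  proof -
    have "(\<Sum>j<m. s j * c j * (\<Prod>i\<in>{..<m}-{j}. s i - s k)) = (\<Sum>j\<in>{k}. s j * c j * (\<Prod>i\<in>{..<m}-{j}. s i - s k))"
    proof (rule sum.mono_neutral_right)
      show "\<forall>j\<in>{..<m} - {k}. s j * c j * (\<Prod>i\<in>{..<m}-{j}. s i - s k) = 0"
      proof
        fix j assume "j \<in> {..<m} - {k}"
        then have "(\<Prod>i\<in>{..<m}-{j}. s i - s k) = 0" using assms(1) by (intro prod_zero) auto
        thus "s j * c j * (\<Prod>i\<in>{..<m}-{j}. s i - s k) = 0" by simp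
      qed
    qed (use assms in auto)
    thus ?thesis by simp
  qed
  thus ?thesis by (simp add: poly_Fp z)
qed

lemma poly_Fp_sec:
  assumes "x \<notin> s ` {..<m}"
  shows "poly (Fp s c m) x = (\<Prod>i<m. s i - x) * (1 + (\<Sum>j<m. s j * c j / (s j - x)))"
proof -
  have "\<And>j. j < m \<Longrightarrow> (\<Prod>i\<in>{..<m}-{j}. s i - x) = (\<Prod>i<m. s i - x) / (s j - x)"
  proof -
    fix j assume j: "j < m"
    have "(\<Prod>i<m. s i - x) = (s j - x) * (\<Prod>i\<in>{..<m}-{j}. s i - x)"
      using j by (subst prod.remove[of _ j]) auto
    moreover have "s j - x \<noteq> 0" using assms j by auto
    ultimately show "(\<Prod>i\<in>{..<m}-{j}. s i - x) = (\<Prod>i<m. s i - x) / (s j - x)" by simp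
  qed
  hence "(\<Sum>j<m. s j * c j * (\<Prod>i\<in>{..<m}-{j}. s i - x)) = (\<Sum>j<m. (\<Prod>i<m. s i - x) * (s j * c j / (s j - x)))"
    by (intro sum.cong) auto
  thus ?thesis by (simp add: poly_Fp sum_distrib_left algebra_simps)
qed

lemma Fp_eq_prod:
  assumes "inj_on x {..<m}" "\<And>k. k < m \<Longrightarrow> poly (Fp s c m) (x k) = (\<Prod>i<m. t i - x k)"
  shows "poly (Fp s c m) y = (\<Prod>i<m. t i - y)"
proof -
  have "Fp s c m = Pp t {..<m}"
  proof (rule poly_eqI_degree_lead_coeff[where n = m and A = "x ` {..<m}"])
    show "coeff (Fp s c m) m = coeff (Pp t {..<m}) m" using coeff_Fp lead_Pp[of "{..<m}" t] by simp
    show "m \<le> card (x ` {..<m})" using card_image[OF assms(1)] by simp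
    show "degree (Fp s c m) \<le> m" by (rule degree_Fp)
    show "degree (Pp t {..<m}) \<le> m" by (simp add: degree_Pp)
    show "\<And>z. z \<in> x ` {..<m} \<Longrightarrow> poly (Fp s c m) z = poly (Pp t {..<m}) z"
      using assms(2) by (auto simp: poly_Pp)
  qed
  thus ?thesis by (simp add: poly_Pp)
qed

lemma sign_prod:
  assumes smono: "\<And>i j. i < j \<Longrightarrow> j < m \<Longrightarrow> s i < (s j::real)" and k: "k < m"
  shows "0 < (-1) ^ k * (\<Prod>i\<in>{..<m}-{k}. s i - s k)"
proof -
  have "(\<Prod>i\<in>{..<m}-{k}. (if i < k then -1 else 1::real)) = (-1) ^ k"
  proof -
    have "({..<m}-{k}) \<inter> {i. i < k} = {..<k}" using k by auto
    thus ?thesis by (simp add: prod.If_cases)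
  qed
  hence "(-1) ^ k * (\<Prod>i\<in>{..<m}-{k}. s i - s k) = (\<Prod>i\<in>{..<m}-{k}. (if i < k then -1 else 1) * (s i - s k))"
    by (simp add: prod.distrib)
  also have "\<dots> > 0"
  proof (rule prod_pos)
    fix i assume i: "i \<in> {..<m}-{k}"
    show "0 < (if i < k then -1 else 1) * (s i - s k)"
    proof (cases "i < k")
      case True thus ?thesis using smono[of i k] k by simp
    next
      case False thus ?thesis using smono[of k i] i by auto
    qed
  qed
  finally show ?thesis .
qed

lemma sign_Fp:
  assumes smono: "\<And>i j. i < j \<Longrightarrow> j < m \<Longrightarrow> s i < (s j::real)" and k: "k < m"
    and "0 < s k" "0 < c k"
  shows "0 < (-1) ^ k * poly (Fp s c m) (s k)"
proof -
  have inj: "inj_on s {..<m}"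
    by (rule inj_onI) (metis lessThan_iff linorder_neqE_nat smono order_less_irrefl)
  have "(-1) ^ k * poly (Fp s c m) (s k) = s k * c k * ((-1) ^ k * (\<Prod>i\<in>{..<m}-{k}. s i - s k))"
    using poly_Fp_at[OF k inj] by simp
  also have "\<dots> > 0" using sign_prod[where s=s and m=m and k=k, OF smono k] assms by simp
  finally show ?thesis .
qed

lemma sign_Fp_large:
  assumes smono: "\<And>i j. i < j \<Longrightarrow> j < m \<Longrightarrow> s i < (s j::real)" and m: "0 < m"
    and pos: "\<And>j. j < m \<Longrightarrow> 0 < s j \<and> 0 < c j"
  defines "L \<equiv> s (m - 1) + 1 + (\<Sum>j<m. s j * c j)"
  shows "0 < (-1) ^ m * poly (Fp s c m) L"
proof -
  define T where "T = (\<Sum>j<m. s j * c j)"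
  have T0: "0 \<le> T" unfolding T_def using pos by (intro sum_nonneg) (simp add: less_imp_le)
  have le: "\<And>j. j < m \<Longrightarrow> s j \<le> s (m - 1)"
    using smono m by (metis Suc_pred' le_less lessI less_Suc_eq_le)
  have gap: "\<And>j. j < m \<Longrightarrow> 1 + T \<le> L - s j" using le unfolding L_def T_def by force
  have notin: "L \<notin> s ` {..<m}" using gap T0 by force
  have "(\<Sum>j<m. s j * c j / (L - s j)) \<le> (\<Sum>j<m. s j * c j / (1 + T))"
  proof (rule sum_mono)
    fix j assume "j \<in> {..<m}"
    hence j: "j < m" by simp
    show "s j * c j / (L - s j) \<le> s j * c j / (1 + T)"
      using gap[OF j] pos[OF j] T0 by (intro divide_left_mono) auto
  qed
  also have "\<dots> = T / (1 + T)" by (simp add: T_def sum_divide_distrib)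
  also have "\<dots> < 1" using T0 by simp
  finally have lt: "(\<Sum>j<m. s j * c j / (L - s j)) < 1" .
  have "(\<Sum>j<m. s j * c j / (s j - L)) = - (\<Sum>j<m. s j * c j / (L - s j))"
    by (simp add: sum_negf[symmetric] minus_divide_right)
  hence sec: "0 < 1 + (\<Sum>j<m. s j * c j / (s j - L))" using lt by simp
  have "(\<Prod>i<m. L - s i) = (\<Prod>i<m. (-1) * (s i - L))" by simp
  also have "\<dots> = (\<Prod>i<m. (-1::real)) * (\<Prod>i<m. s i - L)" by (rule prod.distrib)
  finally have "(-1) ^ m * (\<Prod>i<m. s i - L) = (\<Prod>i<m. L - s i)" by simp
  also have "\<dots> > 0" using gap T0 by (intro prod_pos) (smt (verit) lessThan_iff)
  finally have "0 < (-1) ^ m * (\<Prod>i<m. s i - L)" .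
  thus ?thesis using poly_Fp_sec[OF notin, of c] sec by (simp add: mult.assoc[symmetric])
qed

lemma roots_Fp:
  assumes smono: "\<And>i j. i < j \<Longrightarrow> j < m \<Longrightarrow> s i < (s j::real)"
    and pos: "\<And>j. j < m \<Longrightarrow> 0 < s j \<and> 0 < c j"
  obtains \<mu> where "\<forall>k<m. s k < \<mu> k" "\<forall>k. k + 1 < m \<longrightarrow> \<mu> k < s (k + 1)"
    "{x. poly (Fp s c m) x = 0} = \<mu> ` {..<m}" "\<forall>y. poly (Fp s c m) y = (\<Prod>i<m. \<mu> i - y)"
proof -
  define L where "L = s (m - 1) + 1 + (\<Sum>j<m. s j * c j)"
  have ex: "\<forall>k\<in>{..<m}. \<exists>x. s k < x \<and> (k + 1 < m \<longrightarrow> x < s (k + 1)) \<and> poly (Fp s c m) x = 0"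
  proof
    fix k assume "k \<in> {..<m}"
    hence k: "k < m" by simp
    define hi where "hi = (if k + 1 < m then s (k + 1) else L)"
    define g where "g = (\<lambda>x. (-1) ^ k * poly (Fp s c m) x)"
    have g1: "0 < g (s k)" unfolding g_def using sign_Fp[where s=s and m=m and k=k, OF smono k] pos[OF k] by blast
    have g2: "g hi < 0"
    proof (cases "k + 1 < m")
      case True
      have "0 < (-1) ^ (k+1) * poly (Fp s c m) (s (k+1))"
        using sign_Fp[where s=s and m=m and k="k+1", OF smono True] pos[OF True] by blast
      thus ?thesis using True unfolding g_def hi_def by simp
    next
      case False
      hence km: "m = k + 1" using k by simp
      have "0 < (-1) ^ m * poly (Fp s c m) L"
        unfolding L_def by (rule sign_Fp_large[where s=s and m=m]) (use smono pos k in auto)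
      thus ?thesis using False km unfolding g_def hi_def by simp
    qed
    have skhi: "s k < hi"
    proof (cases "k + 1 < m")
      case True thus ?thesis using smono[of k "k+1"] unfolding hi_def by simp
    next
      case False
      have "0 \<le> (\<Sum>j<m. s j * c j)" using pos by (intro sum_nonneg) (simp add: less_imp_le)
      moreover have "m - 1 = k" using False k by simp
      ultimately show ?thesis using False unfolding hi_def L_def by simp
    qed
    have "continuous_on {s k..hi} g" unfolding g_def by (intro continuous_intros)
    then obtain x where x: "s k \<le> x" "x \<le> hi" "g x = 0"
      using IVT2'[of g hi 0 "s k"] g1 g2 skhi by auto
    have "x \<noteq> s k" "x \<noteq> hi" using x g1 g2 by auto
    hence "s k < x" "x < hi" using x by auto
    moreover have "poly (Fp s c m) x = 0" using x(3) unfolding g_def by simp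
    ultimately show "\<exists>x. s k < x \<and> (k + 1 < m \<longrightarrow> x < s (k + 1)) \<and> poly (Fp s c m) x = 0"
      unfolding hi_def by (intro exI[of _ x]) auto
  qed
  then obtain \<mu> where \<mu>: "\<forall>k\<in>{..<m}. s k < \<mu> k \<and> (k + 1 < m \<longrightarrow> \<mu> k < s (k + 1)) \<and> poly (Fp s c m) (\<mu> k) = 0"
    by metis
  have inc: "\<And>i j. i < j \<Longrightarrow> j < m \<Longrightarrow> \<mu> i < \<mu> j"
  proof -
    fix i j assume ij: "i < j" "j < m"
    have "\<mu> i < s (i + 1)" using \<mu> ij by auto
    also have "s (i + 1) \<le> s j" using smono[of "i+1" j] ij by (cases "i + 1 = j") auto
    also have "s j < \<mu> j" using \<mu> ij by auto
    finally show "\<mu> i < \<mu> j" .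
  qed
  have inj: "inj_on \<mu> {..<m}"
    by (rule inj_onI) (metis lessThan_iff linorder_neqE_nat inc order_less_irrefl)
  have sub: "\<mu> ` {..<m} \<subseteq> {x. poly (Fp s c m) x = 0}" using \<mu> by auto
  have fin: "finite {x. poly (Fp s c m) x = 0}" by (rule poly_roots_finite[OF Fp_nonzero])
  have "card {x. poly (Fp s c m) x = 0} \<le> m"
    using card_poly_roots_bound[OF Fp_nonzero, of s c m] degree_Fp[of s c m] by simp
  moreover have "card (\<mu> ` {..<m}) = m" using card_image[OF inj] by simp
  ultimately have eq: "{x. poly (Fp s c m) x = 0} = \<mu> ` {..<m}"
    using card_subset_eq[OF fin sub] card_mono[OF fin sub] by simp
  have "\<forall>y. poly (Fp s c m) y = (\<Prod>i<m. \<mu> i - y)"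
  proof
    fix y show "poly (Fp s c m) y = (\<Prod>i<m. \<mu> i - y)"
    proof (rule Fp_eq_prod[OF inj])
      fix k assume k: "k < m"
      have "(\<Prod>i<m. \<mu> i - \<mu> k) = 0" using k by (intro prod_zero) auto
      thus "poly (Fp s c m) (\<mu> k) = (\<Prod>i<m. \<mu> i - \<mu> k)" using \<mu> k by simp
    qed
  qed
  moreover have "\<forall>k<m. s k < \<mu> k" "\<forall>k. k + 1 < m \<longrightarrow> \<mu> k < s (k + 1)" using \<mu> by auto
  ultimately show ?thesis using that eq by blast
qed

definition rhoF :: "(nat \<Rightarrow> real) \<Rightarrow> (nat \<Rightarrow> real) \<Rightarrow> nat \<Rightarrow> nat \<Rightarrow> real" where
  "rhoF s \<mu> m k = (\<mu> k - s k) / s k * (\<Prod>i\<in>{..<m}-{k}. (\<mu> i - s k) / (s i - s k))"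

lemma rhoF_alt:
  assumes "k < m"
  shows "rhoF s \<mu> m k = (\<Prod>i<m. \<mu> i - s k) / (s k * (\<Prod>i\<in>{..<m}-{k}. s i - s k))"
proof -
  have "(\<Prod>i<m. \<mu> i - s k) = (\<mu> k - s k) * (\<Prod>i\<in>{..<m}-{k}. \<mu> i - s k)"
    using assms by (subst prod.remove[of _ k]) auto
  thus ?thesis unfolding rhoF_def by (simp add: prod_dividef)
qed

lemma inj_of_mono:
  fixes s :: "nat \<Rightarrow> real"
  assumes "\<And>i j. i < j \<Longrightarrow> j < m \<Longrightarrow> s i < (s j::real)"
  shows "inj_on s {..<m}"
proof (rule inj_onI)
  fix x y assume "x \<in> {..<m}" "y \<in> {..<m}" "s x = s y"
  thus "x = y" by (cases rule: linorder_cases[of x y]) (auto dest: assms)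
qed

lemma prod_ne0:
  fixes s :: "nat \<Rightarrow> real"
  assumes "inj_on s {..<m}" "k < m"
  shows "(\<Prod>i\<in>{..<m}-{k}. s i - s k) \<noteq> (0::real)"
proof -
  have "\<forall>i\<in>{..<m}-{k}. s i - s k \<noteq> 0" using assms by (auto simp: inj_on_def)
  thus ?thesis by (subst prod_zero_iff) auto
qed

lemma c_eq_rhoF:
  assumes P: "\<forall>y. poly (Fp s c m) y = (\<Prod>i<m. \<mu> i - y)" and inj: "inj_on s {..<m}"
    and k: "k < m" and s0: "s k \<noteq> 0"
  shows "c k = rhoF s \<mu> m k"
proof -
  have "s k * c k * (\<Prod>i\<in>{..<m}-{k}. s i - s k) = (\<Prod>i<m. \<mu> i - s k)"
    using poly_Fp_at[OF k inj, of c] P by simp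
  thus ?thesis using rhoF_alt[OF k] prod_ne0[OF inj k] s0 by (simp add: field_simps)
qed

lemma rhoF_pos:
  assumes smono: "\<And>i j. i < j \<Longrightarrow> j < m \<Longrightarrow> s i < (s j::real)"
    and I1: "\<forall>k<m. s k < \<mu> k" and I2: "\<forall>k. k + 1 < m \<longrightarrow> \<mu> k < s (k + 1)"
    and s0: "\<forall>k<m. 0 < s k" and k: "k < m"
  shows "0 < rhoF s \<mu> m k"
  unfolding rhoF_def
proof (rule mult_pos_pos)
  show "0 < (\<mu> k - s k) / s k" using I1 s0 k by auto
  show "0 < (\<Prod>i\<in>{..<m}-{k}. (\<mu> i - s k) / (s i - s k))"
  proof (rule prod_pos)
  fix i assume i: "i \<in> {..<m} - {k}"
  show "0 < (\<mu> i - s k) / (s i - s k)"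
  proof (cases "i < k")
    case True
    have "\<mu> i < s (i + 1)" using I2 True k by auto
    also have "s (i + 1) \<le> s k" using smono[of "i+1" k] True k by (cases "i + 1 = k") auto
    finally have "\<mu> i - s k < 0" by simp
    moreover have "s i - s k < 0" using smono[of i k] True k by simp
    ultimately show ?thesis by (simp add: divide_neg_neg)
  next
    case False
    hence "k < i" using i by auto
    hence "s k < s i" using smono[of k i] i by auto
    moreover have "s i < \<mu> i" using I1 i by auto
    ultimately show ?thesis by simp
  qed
  qed
qed

lemma Fp_rhoF:
  assumes smono: "\<And>i j. i < j \<Longrightarrow> j < m \<Longrightarrow> s i < (s j::real)"
    and s0: "\<forall>k<m. 0 < s k"
    and c: "\<forall>k<m. c k = rhoF s \<mu> m k"
  shows "poly (Fp s c m) y = (\<Prod>i<m. \<mu> i - y)"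
proof (rule Fp_eq_prod[OF inj_of_mono[where s=s and m=m, OF smono]])
  fix k assume k: "k < m"
  have inj: "inj_on s {..<m}" by (rule inj_of_mono[where s=s and m=m, OF smono])
  have "poly (Fp s c m) (s k) = s k * rhoF s \<mu> m k * (\<Prod>i\<in>{..<m}-{k}. s i - s k)"
    using poly_Fp_at[OF k inj, of c] c k by simp
  also have "\<dots> = (\<Prod>i<m. \<mu> i - s k)"
  proof -
    have "s k \<noteq> 0" using s0 k by auto
    thus ?thesis using rhoF_alt[OF k, of s \<mu>] prod_ne0[OF inj k] by (simp add: field_simps)
  qed
  finally show "poly (Fp s c m) (s k) = (\<Prod>i<m. \<mu> i - s k)" .
qed

lemma smono_of_step:
  fixes s :: "nat \<Rightarrow> real"
  assumes "\<forall>k. k + 1 < m \<longrightarrow> s k < s (k + 1)"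
  shows "\<And>i j. i < j \<Longrightarrow> j < m \<Longrightarrow> s i < s j"
proof -
  fix i j :: nat assume ij: "i < j" "j < m"
  from ij show "s i < s j"
  proof (induction j)
    case 0 thus ?case by simp
  next
    case (Suc j)
    show ?case
    proof (cases "i = j")
      case True thus ?thesis using assms Suc by simp
    next
      case False
      hence "s i < s j" using Suc by simp
      also have "s j < s (Suc j)" using assms Suc by simp
      finally show ?thesis .
    qed
  qed
qed

lemma interlace_facts:
  fixes s \<mu> :: "nat \<Rightarrow> real"
  assumes smono: "\<And>i j. i < j \<Longrightarrow> j < m \<Longrightarrow> s i < s j"
    and I1: "\<forall>k<m. s k < \<mu> k" and I2: "\<forall>k. k + 1 < m \<longrightarrow> \<mu> k < s (k + 1)"
  shows "\<And>i j. i < j \<Longrightarrow> j < m \<Longrightarrow> \<mu> i < \<mu> j" "\<And>k. k < m \<Longrightarrow> \<mu> k \<notin> s ` {..<m}"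
proof -
  fix i j assume ij: "i < j" "j < m"
  have "\<mu> i < s (i + 1)" using I2 ij by auto
  also have "s (i + 1) \<le> s j" using smono[of "i+1" j] ij by (cases "i + 1 = j") auto
  also have "s j < \<mu> j" using I1 ij by auto
  finally show "\<mu> i < \<mu> j" .
next
  fix k assume k: "k < m"
  show "\<mu> k \<notin> s ` {..<m}"
  proof
    assume "\<mu> k \<in> s ` {..<m}"
    then obtain j where j: "j < m" "\<mu> k = s j" by auto
    show False
    proof (cases "j \<le> k")
      case True
      hence "s j \<le> s k" using smono[of j k] k by (cases "j = k") auto
      thus False using I1 k j by auto
    next
      case False
      hence a: "\<mu> k < s (k + 1)" using I2 j(1) by auto
      have b: "s (k + 1) \<le> s j"
      proof (cases "k + 1 = j")
        case True thus ?thesis by simp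
      next
        case False
        thus ?thesis using smono[of "k+1" j] \<open>\<not> j \<le> k\<close> j by simp
      qed
      from a b j(2) show False by simp
    qed
  qed
qed

lemma secular_alt:
  assumes "length \<sigma> = m" "length bs = m"
  shows "secular \<sigma> bs x = 1 + (\<Sum>j<m. (\<sigma> ! j) * (bs ! j / (1 - sum_list bs)) / (\<sigma> ! j - x))"
  unfolding secular_def using assms by simp

lemma mu_list_eq:
  fixes \<mu> :: "nat \<Rightarrow> real"
  assumes len: "length \<sigma> = m" "length bs = m"
    and P: "\<forall>y. poly (Fp (\<lambda>j. \<sigma> ! j) (\<lambda>j. bs ! j / (1 - sum_list bs)) m) y = (\<Prod>i<m. \<mu> i - y)"
    and smono: "\<And>i j. i < j \<Longrightarrow> j < m \<Longrightarrow> \<sigma> ! i < \<sigma> ! j"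
    and I1: "\<forall>k<m. \<sigma> ! k < \<mu> k" and I2: "\<forall>k. k + 1 < m \<longrightarrow> \<mu> k < \<sigma> ! (k + 1)"
  shows "mu_list \<sigma> bs = map \<mu> [0..<m]"
proof -
  let ?s = "\<lambda>j. \<sigma> ! j"
  let ?c = "\<lambda>j. bs ! j / (1 - sum_list bs)"
  have setS: "set \<sigma> = ?s ` {..<m}" using len by (auto simp: set_conv_nth)
  have IF1: "\<And>i j. i < j \<Longrightarrow> j < m \<Longrightarrow> \<mu> i < \<mu> j"
    using interlace_facts(1)[of m ?s \<mu>] smono I1 I2 by blast
  have IF2: "\<And>k. k < m \<Longrightarrow> \<mu> k \<notin> ?s ` {..<m}"
    using interlace_facts(2)[of m ?s \<mu>] smono I1 I2 by blast
  have "{x. x \<notin> set \<sigma> \<and> secular \<sigma> bs x = 0} = \<mu> ` {..<m}"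
  proof (intro set_eqI iffI)
    fix x assume x: "x \<in> {x. x \<notin> set \<sigma> \<and> secular \<sigma> bs x = 0}"
    hence xn: "x \<notin> ?s ` {..<m}" using setS by auto
    have "(\<Prod>i<m. \<mu> i - x) = 0"
      using poly_Fp_sec[OF xn, of ?c] P x secular_alt[OF len, of x] by simp
    thus "x \<in> \<mu> ` {..<m}" by (auto simp: prod_zero_iff)
  next
    fix x assume "x \<in> \<mu> ` {..<m}"
    then obtain k where k: "k < m" "x = \<mu> k" by auto
    have xn: "x \<notin> ?s ` {..<m}" using IF2[OF k(1)] k by simp
    have z: "(\<Prod>i<m. \<mu> i - x) = 0" using k by (intro prod_zero) auto
    have pne: "(\<Prod>i<m. ?s i - x) \<noteq> 0" using xn by (auto simp: prod_zero_iff)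
    have "(\<Prod>i<m. ?s i - x) * (1 + (\<Sum>j<m. ?s j * ?c j / (?s j - x))) = 0"
      using poly_Fp_sec[OF xn, of ?c] P z by simp
    hence "secular \<sigma> bs x = 0" using pne secular_alt[OF len, of x] by simp
    thus "x \<in> {x. x \<notin> set \<sigma> \<and> secular \<sigma> bs x = 0}" using xn setS by auto
  qed
  also have "\<dots> = set (map \<mu> [0..<m])" by auto
  finally have eq: "{x. x \<notin> set \<sigma> \<and> secular \<sigma> bs x = 0} = set (map \<mu> [0..<m])" .
  have sw: "sorted_wrt (<) (map \<mu> [0..<m])"
    by (auto simp: sorted_wrt_iff_nth_less intro: IF1)
  hence "sorted (map \<mu> [0..<m])" "distinct (map \<mu> [0..<m])" by (auto simp: strict_sorted_iff)
  thus ?thesis unfolding mu_list_def eq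
    by (metis sorted_list_of_set_sort_remdups distinct_remdups_id sorted_sort_id)
qed

lemma root_pow: "0 < (d::real) \<Longrightarrow> 0 < k \<Longrightarrow> (d ^ k) powr (1 / real k) = d"
  by (simp add: powr_realpow[symmetric] powr_powr)

lemma pow_root: "0 < (x::real) \<Longrightarrow> 0 < k \<Longrightarrow> (x powr (1 / real k)) ^ k = x"
  by (simp add: powr_realpow[symmetric] powr_powr)

lemma sigma_pos:
  assumes "0 < d" "0 < b" "2 < n \<Longrightarrow> 0 < \<kappa>"
  shows "0 < sigma_val n \<kappa> d b"
  using assms by (auto simp: sigma_val_def)

lemma rho_eq_rhoF:
  assumes "length \<sigma> = m" "length \<mu>l = m" "\<And>i. i < m \<Longrightarrow> \<mu>l ! i = \<mu> i"  "j < m"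
  shows "rho \<sigma> \<mu>l j = rhoF (\<lambda>i. \<sigma> ! i) \<mu> m j"
  unfolding rho_def rhoF_def using assms by (auto simp: atLeast0LessThan intro!: prod.cong)

lemma forward:
  assumes kpos: "2 < n \<Longrightarrow> 0 < \<kappa>" and x: "x \<in> domL n \<kappa> m"
  shows "Lmap n \<kappa> x \<in> Gset m \<and> Linv n \<kappa> (Lmap n \<kappa> x) = x"
proof -
  obtain ds bs where xdb: "x = (ds, bs)" by force
  have ld: "length ds = m" and lb: "length bs = m" and pos: "\<forall>j<m. 0 < ds ! j \<and> 0 < bs ! j"
    and B1: "sum_list bs < 1" and sw: "sorted_wrt (<) (sigma_list n \<kappa> ds bs)"
    using x xdb by (auto simp: domL_def)
  define \<sigma> where "\<sigma> = sigma_list n \<kappa> ds bs"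
  define B where "B = sum_list bs"
  define c where "c = (\<lambda>j. bs ! j / (1 - B))"
  define s where "s = (\<lambda>j. \<sigma> ! j)"
  have l\<sigma>: "length \<sigma> = m" using ld lb by (simp add: \<sigma>_def sigma_list_def)
  have snth: "\<And>j. j < m \<Longrightarrow> s j = sigma_val n \<kappa> (ds ! j) (bs ! j)"
    using ld lb by (simp add: s_def \<sigma>_def sigma_list_def)
  have spos: "\<And>j. j < m \<Longrightarrow> 0 < s j" using snth pos sigma_pos kpos by simp
  have cpos: "\<And>j. j < m \<Longrightarrow> 0 < c j" using pos B1 by (simp add: c_def B_def)
  have smono: "\<And>i j. i < j \<Longrightarrow> j < m \<Longrightarrow> s i < s j"
    using sw l\<sigma> by (simp add: sorted_wrt_iff_nth_less s_def \<sigma>_def)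
  obtain \<mu> where I1: "\<forall>k<m. s k < \<mu> k" and I2: "\<forall>k. k + 1 < m \<longrightarrow> \<mu> k < s (k + 1)"
    and P: "\<forall>y. poly (Fp s c m) y = (\<Prod>i<m. \<mu> i - y)"
    using roots_Fp[of m s c] smono spos cpos by metis
  have mu: "mu_list \<sigma> bs = map \<mu> [0..<m]"
    by (rule mu_list_eq[OF l\<sigma> lb]) (use P I1 I2 smono in \<open>simp_all add: s_def c_def B_def\<close>)
  have L: "Lmap n \<kappa> x = (\<sigma>, map \<mu> [0..<m])"
    using mu by (simp add: Lmap_def xdb \<sigma>_def)
  have G: "Lmap n \<kappa> x \<in> Gset m"
  proof -
    have "\<And>j. j + 1 < m \<Longrightarrow> \<sigma> ! j < \<mu> j \<and> \<mu> j < \<sigma> ! (j + 1)" using I1 I2 by (auto simp: s_def)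
    moreover have "0 < m \<Longrightarrow> \<sigma> ! (m - 1) < \<mu> (m - 1) \<and> 0 < \<sigma> ! 0"
      using I1 spos by (auto simp: s_def)
    ultimately show ?thesis unfolding L Gset_def using l\<sigma> by auto
  qed
  have inj: "inj_on s {..<m}" by (rule inj_of_mono[where s=s and m=m, OF smono])
  have rho: "\<And>j. j < m \<Longrightarrow> rho \<sigma> (map \<mu> [0..<m]) j = c j"
  proof -
    fix j assume j: "j < m"
    have "rho \<sigma> (map \<mu> [0..<m]) j = rhoF s \<mu> m j"
      unfolding s_def by (rule rho_eq_rhoF) (use l\<sigma> j in auto)
    also have "\<dots> = c j" using c_eq_rhoF[OF P inj j] spos[OF j] by simp
    finally show "rho \<sigma> (map \<mu> [0..<m]) j = c j" .
  qed
  have sumb: "B = (\<Sum>i<m. bs ! i)" using lb by (simp add: B_def sum_list_sum_nth atLeast0LessThan)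
  have sumc: "1 + (\<Sum>i<m. c i) = 1 / (1 - B)"
  proof -
    have "(\<Sum>i<m. c i) = B / (1 - B)" by (simp add: c_def sumb sum_divide_distrib)
    thus ?thesis using B1 by (simp add: B_def field_simps)
  qed
  have S: "1 + (\<Sum>i<m. rho \<sigma> (map \<mu> [0..<m]) i) = 1 / (1 - B)" using rho sumc by simp
  have bsq: "map (\<lambda>j. rho \<sigma> (map \<mu> [0..<m]) j / (1 + (\<Sum>i<m. rho \<sigma> (map \<mu> [0..<m]) i))) [0..<m] = bs"
  proof (rule nth_equalityI)
    show "length (map (\<lambda>j. rho \<sigma> (map \<mu> [0..<m]) j / (1 + (\<Sum>i<m. rho \<sigma> (map \<mu> [0..<m]) i))) [0..<m]) = length bs"
      using lb by simp
    fix j assume "j < length (map (\<lambda>j. rho \<sigma> (map \<mu> [0..<m]) j / (1 + (\<Sum>i<m. rho \<sigma> (map \<mu> [0..<m]) i))) [0..<m])"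
    hence j: "j < m" by simp
    show "map (\<lambda>j. rho \<sigma> (map \<mu> [0..<m]) j / (1 + (\<Sum>i<m. rho \<sigma> (map \<mu> [0..<m]) i))) [0..<m] ! j = bs ! j"
      using j rho[OF j] S B1 by (simp add: c_def B_def)
  qed
  have dsq: "map (\<lambda>j. if n > 2 then (4 * \<sigma> ! j * rho \<sigma> (map \<mu> [0..<m]) j / (\<kappa> * (1 + (\<Sum>i<m. rho \<sigma> (map \<mu> [0..<m]) i)))) powr (1 / real (n - 2))
               else 2 * \<sigma> ! j * rho \<sigma> (map \<mu> [0..<m]) j / (pi * (1 + (\<Sum>i<m. rho \<sigma> (map \<mu> [0..<m]) i)))) [0..<m] = ds"
  proof (rule nth_equalityI)
    fix j assume "j < length (map (\<lambda>j. if n > 2 then (4 * \<sigma> ! j * rho \<sigma> (map \<mu> [0..<m]) j / (\<kappa> * (1 + (\<Sum>i<m. rho \<sigma> (map \<mu> [0..<m]) i)))) powr (1 / real (n - 2))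
               else 2 * \<sigma> ! j * rho \<sigma> (map \<mu> [0..<m]) j / (pi * (1 + (\<Sum>i<m. rho \<sigma> (map \<mu> [0..<m]) i)))) [0..<m])"
    hence j: "j < m" by simp
    have bj: "c j / (1 / (1 - B)) = bs ! j" using B1 by (simp add: c_def B_def)
    have d0: "0 < ds ! j" "0 < bs ! j" using pos j by auto
    have sj: "\<sigma> ! j = sigma_val n \<kappa> (ds ! j) (bs ! j)" using snth[OF j] by (simp add: s_def)
    show "map (\<lambda>j. if n > 2 then (4 * \<sigma> ! j * rho \<sigma> (map \<mu> [0..<m]) j / (\<kappa> * (1 + (\<Sum>i<m. rho \<sigma> (map \<mu> [0..<m]) i)))) powr (1 / real (n - 2))
               else 2 * \<sigma> ! j * rho \<sigma> (map \<mu> [0..<m]) j / (pi * (1 + (\<Sum>i<m. rho \<sigma> (map \<mu> [0..<m]) i)))) [0..<m] ! j = ds ! j"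
    proof (cases "2 < n")
      case True
      have k0: "0 < \<kappa>" using kpos True by simp
      have "4 * \<sigma> ! j * c j / (\<kappa> * (1 / (1 - B))) = 4 * \<sigma> ! j * (c j / (1 / (1 - B))) / \<kappa>"
        by simp
      also have "\<dots> = 4 * \<sigma> ! j * bs ! j / \<kappa>" using bj by simp
      also have "\<dots> = ds ! j ^ (n - 2)" using sj True k0 d0 by (simp add: sigma_val_def field_simps)
      finally have e: "4 * \<sigma> ! j * c j / (\<kappa> * (1 / (1 - B))) = ds ! j ^ (n - 2)" .
      show ?thesis using j True rho[OF j] S e root_pow[OF d0(1), of "n - 2"] by simp
    next
      case False
      have "2 * \<sigma> ! j * c j / (pi * (1 / (1 - B))) = 2 * \<sigma> ! j * (c j / (1 / (1 - B))) / pi"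
        by simp
      also have "\<dots> = 2 * \<sigma> ! j * bs ! j / pi" using bj by simp
      also have "\<dots> = ds ! j" using sj False d0 by (simp add: sigma_val_def field_simps)
      finally show ?thesis using j False rho[OF j] S by simp
    qed
  qed (use ld in simp)
  have "Linv n \<kappa> (\<sigma>, map \<mu> [0..<m]) = (ds, bs)"
    unfolding Linv_def Let_def fst_conv snd_conv l\<sigma> using bsq dsq by (simp only: prod.inject)
  hence "Linv n \<kappa> (Lmap n \<kappa> x) = x" using L xdb by simp
  thus ?thesis using G by simp
qed

lemma reverse:
  assumes kpos: "2 < n \<Longrightarrow> 0 < \<kappa>" and p: "p \<in> Gset m"
  shows "Linv n \<kappa> p \<in> domL n \<kappa> m \<and> Lmap n \<kappa> (Linv n \<kappa> p) = p"
proof -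
  obtain \<sigma> \<mu>l where pdb: "p = (\<sigma>, \<mu>l)" by force
  have l\<sigma>: "length \<sigma> = m" and l\<mu>: "length \<mu>l = m"
    and G1: "\<forall>j. j + 1 < m \<longrightarrow> \<sigma> ! j < \<mu>l ! j \<and> \<mu>l ! j < \<sigma> ! (j + 1)"
    and G2: "0 < m \<longrightarrow> \<sigma> ! (m - 1) < \<mu>l ! (m - 1) \<and> 0 < \<sigma> ! 0"
    using p pdb by (auto simp: Gset_def)
  define s where "s = (\<lambda>j. \<sigma> ! j)"
  define \<mu> where "\<mu> = (\<lambda>j. \<mu>l ! j)"
  have I1: "\<forall>k<m. s k < \<mu> k"
  proof (intro allI impI)
    fix k assume k: "k < m"
    show "s k < \<mu> k"
    proof (cases "k + 1 < m")
      case True thus ?thesis using G1 by (simp add: s_def \<mu>_def)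
    next
      case False hence "k = m - 1" using k by simp
      thus ?thesis using G2 k by (simp add: s_def \<mu>_def)
    qed
  qed
  have I2: "\<forall>k. k + 1 < m \<longrightarrow> \<mu> k < s (k + 1)" using G1 by (simp add: s_def \<mu>_def)
  have step: "\<forall>k. k + 1 < m \<longrightarrow> s k < s (k + 1)"
    using I1 I2 by (metis add_lessD1 order.strict_trans)
  have smono: "\<And>i j. i < j \<Longrightarrow> j < m \<Longrightarrow> s i < s j" by (rule smono_of_step[OF step])
  have spos: "\<forall>k<m. 0 < s k"
  proof (intro allI impI)
    fix k assume k: "k < m"
    have "0 < s 0" using G2 k by (simp add: s_def)
    thus "0 < s k" using smono[of 0 k] k by (cases "k = 0") auto
  qed
  define r where "r = (\<lambda>j. rho \<sigma> \<mu>l j)"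
  have r_eq: "\<And>j. j < m \<Longrightarrow> r j = rhoF s \<mu> m j"
    unfolding r_def s_def by (rule rho_eq_rhoF) (use l\<sigma> l\<mu> in \<open>auto simp: \<mu>_def\<close>)
  have rpos: "\<And>j. j < m \<Longrightarrow> 0 < r j"
    using r_eq rhoF_pos[where s=s and m=m, OF smono I1 I2 spos] by simp
  define S where "S = 1 + (\<Sum>i<m. r i)"
  have R0: "0 \<le> (\<Sum>i<m. r i)" using rpos by (intro sum_nonneg) (simp add: less_imp_le)
  have S0: "0 < S" using R0 by (simp add: S_def)
  define ds where "ds = map (\<lambda>j. if n > 2 then (4 * \<sigma> ! j * r j / (\<kappa> * S)) powr (1 / real (n - 2))
               else 2 * \<sigma> ! j * r j / (pi * S)) [0..<m]"
  define bs where "bs = map (\<lambda>j. r j / S) [0..<m]"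
  have Lp: "Linv n \<kappa> p = (ds, bs)"
    unfolding Linv_def Let_def pdb fst_conv snd_conv l\<sigma> ds_def bs_def S_def r_def by (simp only: prod.inject)
  have lds: "length ds = m" and lbs: "length bs = m" by (simp_all add: ds_def bs_def)
  have bnth: "\<And>j. j < m \<Longrightarrow> bs ! j = r j / S" by (simp add: bs_def)
  have dnth: "\<And>j. j < m \<Longrightarrow> ds ! j = (if n > 2 then (4 * \<sigma> ! j * r j / (\<kappa> * S)) powr (1 / real (n - 2))
               else 2 * \<sigma> ! j * r j / (pi * S))" by (simp add: ds_def)
  have sumbs: "sum_list bs = (\<Sum>i<m. r i) / S"
    by (simp add: sum_list_sum_nth lbs bnth atLeast0LessThan sum_divide_distrib)
  have B1: "sum_list bs < 1" using sumbs S0 by (simp add: S_def)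
  have oneB: "1 - sum_list bs = 1 / S" using sumbs S0 by (simp add: S_def field_simps)
  have posdb: "\<forall>j<m. 0 < ds ! j \<and> 0 < bs ! j"
  proof (intro allI impI conjI)
    fix j assume j: "j < m"
    have a: "0 < \<sigma> ! j" using spos j by (simp add: s_def)
    show "0 < bs ! j" using bnth[OF j] rpos[OF j] S0 by simp
    show "0 < ds ! j"
    proof (cases "2 < n")
      case True
      have "0 < 4 * \<sigma> ! j * r j / (\<kappa> * S)" using a rpos[OF j] S0 kpos[OF True] by simp
      thus ?thesis using dnth[OF j] True a rpos[OF j] S0 kpos[OF True] by simp
    next
      case False thus ?thesis using dnth[OF j] a rpos[OF j] S0 by simp
    qed
  qed
  have sig: "sigma_list n \<kappa> ds bs = \<sigma>"
  proof (rule nth_equalityI)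
    show "length (sigma_list n \<kappa> ds bs) = length \<sigma>" using lds lbs l\<sigma> by (simp add: sigma_list_def)
    fix j assume "j < length (sigma_list n \<kappa> ds bs)"
    hence j: "j < m" using lds lbs by (simp add: sigma_list_def)
    have a: "0 < \<sigma> ! j" using spos j by (simp add: s_def)
    have rj: "0 < r j" using rpos[OF j] .
    have "sigma_val n \<kappa> (ds ! j) (bs ! j) = \<sigma> ! j"
    proof (cases "2 < n")
      case True
      have k0: "0 < \<kappa>" using kpos True by simp
      have X: "0 < 4 * \<sigma> ! j * r j / (\<kappa> * S)" using a rj S0 k0 by simp
      have e: "ds ! j ^ (n - 2) = 4 * \<sigma> ! j * r j / (\<kappa> * S)"
        using dnth[OF j] True pow_root[OF X, of "n - 2"] by simp
      have "sigma_val n \<kappa> (ds ! j) (bs ! j) = \<kappa> * (4 * \<sigma> ! j * r j / (\<kappa> * S)) / (4 * (r j / S))"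
        using True e bnth[OF j] by (simp add: sigma_val_def)
      also have "\<dots> = \<sigma> ! j" using k0 S0 rj by (simp add: field_simps)
      finally show ?thesis .
    next
      case False
      have "sigma_val n \<kappa> (ds ! j) (bs ! j) = pi * (2 * \<sigma> ! j * r j / (pi * S)) / (2 * (r j / S))"
        using False dnth[OF j] bnth[OF j] by (simp add: sigma_val_def)
      also have "\<dots> = \<sigma> ! j" using S0 rj by (simp add: field_simps)
      finally show ?thesis .
    qed
    thus "sigma_list n \<kappa> ds bs ! j = \<sigma> ! j" using j lds lbs by (simp add: sigma_list_def)
  qed
  have sw: "sorted_wrt (<) \<sigma>" using smono l\<sigma> by (simp add: sorted_wrt_iff_nth_less s_def)
  have dom: "(ds, bs) \<in> domL n \<kappa> m" unfolding domL_def using lds lbs posdb B1 sw sig by simp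
  have c: "\<forall>k<m. bs ! k / (1 - sum_list bs) = rhoF s \<mu> m k"
    using bnth oneB r_eq S0 by simp
  have P: "\<forall>y. poly (Fp (\<lambda>j. \<sigma> ! j) (\<lambda>j. bs ! j / (1 - sum_list bs)) m) y = (\<Prod>i<m. \<mu> i - y)"
    using Fp_rhoF[where s=s and m=m, OF smono spos c] by (simp add: s_def)
  have mu: "mu_list \<sigma> bs = map \<mu> [0..<m]"
    by (rule mu_list_eq[OF l\<sigma> lbs P]) (use smono I1 I2 in \<open>simp_all add: s_def\<close>)
  have "map \<mu> [0..<m] = \<mu>l" using l\<mu> by (intro nth_equalityI) (auto simp: \<mu>_def)
  hence "Lmap n \<kappa> (ds, bs) = p" using mu sig pdb by (simp add: Lmap_def)
  thus ?thesis using dom Lp by simp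
qed

lemma alg_main:
  assumes kpos: "2 < n \<Longrightarrow> 0 < \<kappa>"
  shows "bij_betw (Lmap n \<kappa>) (domL n \<kappa> m) (Gset m) \<and>
    (\<forall>p \<in> Gset m. inv_into (domL n \<kappa> m) (Lmap n \<kappa>) p = Linv n \<kappa> p)"
proof -
  have inj: "inj_on (Lmap n \<kappa>) (domL n \<kappa> m)"
  proof (rule inj_onI)
    fix x y assume "x \<in> domL n \<kappa> m" "y \<in> domL n \<kappa> m" "Lmap n \<kappa> x = Lmap n \<kappa> y"
    thus "x = y" using forward[OF kpos] by metis
  qed
  have img: "Lmap n \<kappa> ` domL n \<kappa> m = Gset m"
  proof
    show "Lmap n \<kappa> ` domL n \<kappa> m \<subseteq> Gset m" using forward[OF kpos] by auto
    show "Gset m \<subseteq> Lmap n \<kappa> ` domL n \<kappa> m"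
    proof
      fix p assume "p \<in> Gset m"
      thus "p \<in> Lmap n \<kappa> ` domL n \<kappa> m" using reverse[OF kpos] by (metis image_eqI)
    qed
  qed
  have "\<forall>p \<in> Gset m. inv_into (domL n \<kappa> m) (Lmap n \<kappa>) p = Linv n \<kappa> p"
  proof
    fix p assume p: "p \<in> Gset m"
    hence "Linv n \<kappa> p \<in> domL n \<kappa> m" "Lmap n \<kappa> (Linv n \<kappa> p) = p" using reverse[OF kpos] by auto
    thus "inv_into (domL n \<kappa> m) (Lmap n \<kappa>) p = Linv n \<kappa> p" using inv_into_f_f[OF inj] by metis
  qed
  thus ?thesis using inj img by (simp add: bij_betw_def)
qed



definition LD :: "'n::finite \<Rightarrow> (real^'n \<Rightarrow> real) \<Rightarrow> (real^'n \<Rightarrow> real) \<Rightarrow> bool" where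
  "LD i g g' \<longleftrightarrow> (\<forall>x. ((\<lambda>t. g (x + t *\<^sub>R axis i 1)) has_real_derivative g' x) (at 0))"

lemma LD_at:
  assumes "LD i g g'"
  shows "((\<lambda>s. g (x + s *\<^sub>R axis i 1)) has_real_derivative g' (x + s *\<^sub>R axis i 1)) (at s)"
proof -
  have "((\<lambda>t. g ((x + s *\<^sub>R axis i 1) + t *\<^sub>R axis i 1)) has_real_derivative g' (x + s *\<^sub>R axis i 1)) (at 0)"
    using assms unfolding LD_def by blast
  hence "((\<lambda>t. g (x + (t + s) *\<^sub>R axis i 1)) has_real_derivative g' (x + s *\<^sub>R axis i 1)) (at 0)"
    by (simp add: scaleR_add_left add.assoc add.commute add.left_commute)
  thus ?thesis using DERIV_shift[of "\<lambda>t. g (x + t *\<^sub>R axis i 1)" "g' (x + s *\<^sub>R axis i 1)" 0 s] by simp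
qed

lemma smooth_LD:
  assumes "smooth_fun w"
  shows "LD i (iter_partial is w) (iter_partial (i # is) w)"
  unfolding LD_def
proof
  fix x
  have "(\<lambda>t. iter_partial is w (x + t *\<^sub>R axis i 1)) differentiable (at 0)"
    using assms unfolding smooth_fun_def by blast
  thus "((\<lambda>t. iter_partial is w (x + t *\<^sub>R axis i 1)) has_real_derivative iter_partial (i # is) w x) (at 0)"
    by (simp add: partial_deriv_def DERIV_deriv_iff_real_differentiable)
qed

lemma smooth_cont:
  assumes "smooth_fun w"
  shows "continuous_on UNIV (iter_partial is w)"
  using assms unfolding smooth_fun_def by blast

lemma LD_add: "LD i f f' \<Longrightarrow> LD i g g' \<Longrightarrow> LD i (\<lambda>x. f x + g x) (\<lambda>x. f' x + g' x)"
  unfolding LD_def by (auto intro: derivative_intros)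

lemma LD_mult: "LD i f f' \<Longrightarrow> LD i g g' \<Longrightarrow> LD i (\<lambda>x. f x * g x) (\<lambda>x. f' x * g x + f x * g' x)"
  unfolding LD_def by (auto intro!: derivative_eq_intros)

lemma LD_const: "LD i (\<lambda>x. c) (\<lambda>x. 0)"
  unfolding LD_def by (auto intro: derivative_intros)

lemma line_comp: "(x + t *\<^sub>R axis i 1) $ j = x $ j + (if j = i then t else 0)"
  by (simp add: axis_def)

lemma LD_coord: "LD i (\<lambda>x. x $ j) (\<lambda>x. if j = i then 1 else 0)"
  unfolding LD_def line_comp by (auto intro!: derivative_eq_intros)

lemma norm_sq_sum: "norm (x::real^'n) ^ 2 = (\<Sum>i\<in>UNIV. (x $ i) ^ 2)"
proof -
  have "norm x ^ 2 = inner x x" by (rule power2_norm_eq_inner)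
  thus ?thesis by (simp add: inner_vec_def power2_eq_square)
qed

lemma norm_sq_line: "norm (x + t *\<^sub>R axis i 1 :: real^'n) ^ 2 = norm x ^ 2 + 2 * t * x $ i + t ^ 2"
proof -
  have a: "inner (axis i 1) (axis i (1::real) :: real^'n) = 1" by (simp add: inner_axis)
  have b: "inner x (axis i (1::real)) = x $ i" by (simp add: inner_axis)
  have c: "inner (axis i (1::real)) x = x $ i" by (simp add: inner_axis')
  have "norm (x + t *\<^sub>R axis i 1) ^ 2 = inner (x + t *\<^sub>R axis i 1) (x + t *\<^sub>R axis i 1)"
    by (rule power2_norm_eq_inner)
  also have "\<dots> = inner x x + 2 * t * x $ i + t ^ 2"
    by (simp add: inner_add_left inner_add_right a b c power2_eq_square algebra_simps)
  finally show ?thesis by (simp add: power2_norm_eq_inner)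
qed

lemma LD_normsq: "LD i (\<lambda>x. norm x ^ 2) (\<lambda>x. 2 * x $ i)"
  unfolding LD_def norm_sq_line by (auto intro!: derivative_eq_intros)

lemma pd_zero_outside:
  fixes F :: "real^'n \<Rightarrow> real"
  assumes K: "closed K" and F: "\<And>y. y \<notin> K \<Longrightarrow> F y = 0" and x: "x \<notin> K"
  shows "partial_deriv i F x = 0"
proof -
  have "open (- K)" using K by auto
  then obtain d where d: "0 < d" "ball x d \<subseteq> - K" using x by (meson ComplI open_contains_ball)
  have "((\<lambda>t. 0::real) has_real_derivative 0) (at 0)" by simp
  hence "((\<lambda>t. F (x + t *\<^sub>R axis i 1)) has_real_derivative 0) (at 0)"
  proof (rule has_field_derivative_transform_within[where S=UNIV and d=d, simplified])
    show "0 < d" by fact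
    fix t :: real assume "dist t 0 < d"
    hence "x + t *\<^sub>R axis i 1 \<in> ball x d" by (simp add: dist_norm)
    thus "0 = F (x + t *\<^sub>R axis i 1)" using d F by auto
  qed
  thus ?thesis unfolding partial_deriv_def by (rule DERIV_imp_deriv)
qed

lemma iter_zero_outside:
  fixes w :: "real^'n \<Rightarrow> real"
  assumes K: "closed K" and w: "\<And>y. y \<notin> K \<Longrightarrow> w y = 0"
  shows "x \<notin> K \<Longrightarrow> iter_partial is w x = 0"
proof (induction "is" arbitrary: x)
  case Nil thus ?case using w by simp
next
  case (Cons i "is")
  show ?case using pd_zero_outside[OF K Cons.IH Cons.prems] by simp
qed

lemma int_supp:
  fixes f :: "real^'n \<Rightarrow> real"
  assumes "continuous_on UNIV f" "\<And>x. x \<notin> K \<Longrightarrow> f x = 0" "K \<subseteq> cbox a b"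
  shows "f integrable_on UNIV" "integral UNIV f = integral (cbox a b) f"
proof -
  have "(f has_integral integral (cbox a b) f) (cbox a b)"
    using assms(1) by (intro integrable_integral integrable_continuous) (auto intro: continuous_on_subset)
  hence "(f has_integral integral (cbox a b) f) UNIV"
    by (rule has_integral_on_superset) (use assms in auto)
  thus "f integrable_on UNIV" "integral UNIV f = integral (cbox a b) f" by (auto simp: integral_unique)
qed

lemma cont_line2:
  fixes g :: "real^'n \<Rightarrow> real"
  assumes "continuous_on UNIV g"
  shows "continuous_on S (\<lambda>(x, s::real). g (x + s *\<^sub>R c))"
proof -
  have "continuous_on S (\<lambda>p. g (fst p + snd p *\<^sub>R c))"
    by (rule continuous_on_compose2[OF assms]) (auto intro!: continuous_intros)
  thus ?thesis by (simp add: case_prod_beta)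
qed

lemma IBP:
  fixes g g' :: "real^'n \<Rightarrow> real"
  assumes LD: "LD i g g'" and cg: "continuous_on UNIV g" and cg': "continuous_on UNIV g'"
    and K: "compact K" and z: "\<And>x. x \<notin> K \<Longrightarrow> g x = 0 \<and> g' x = 0"
  shows "integral UNIV g' = 0"
proof -
  define e where "e = axis i (1::real)"
  obtain a where a: "K \<subseteq> cbox (-a) a" using compact_imp_bounded[OF K] bounded_subset_cbox_symmetric by metis
  define Q where "Q = cbox (-a - e) a"
  have eco: "\<And>j. e $ j \<ge> 0" "\<And>j. e $ j \<le> 1" by (auto simp: e_def axis_def)
  have KQ: "\<And>s. 0 \<le> s \<Longrightarrow> s \<le> 1 \<Longrightarrow> K \<subseteq> cbox (-a - e + s *\<^sub>R e) (a + s *\<^sub>R e)"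
  proof -
    fix s :: real assume s: "0 \<le> s" "s \<le> 1"
    show "K \<subseteq> cbox (-a - e + s *\<^sub>R e) (a + s *\<^sub>R e)"
    proof
      fix x assume "x \<in> K"
      hence x: "\<And>j. -a $ j \<le> x $ j \<and> x $ j \<le> a $ j" using a by (auto simp: mem_box_cart)
      have "\<And>j. (-a - e + s *\<^sub>R e) $ j \<le> x $ j \<and> x $ j \<le> (a + s *\<^sub>R e) $ j"
      proof -
        fix j
        have "0 \<le> s * e $ j" "s * e $ j \<le> e $ j" using s eco[of j] by (auto intro: mult_left_le_one_le)
        thus "(-a - e + s *\<^sub>R e) $ j \<le> x $ j \<and> x $ j \<le> (a + s *\<^sub>R e) $ j" using x[of j] by simp
      qed
      thus "x \<in> cbox (-a - e + s *\<^sub>R e) (a + s *\<^sub>R e)" by (simp add: mem_box_cart)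
    qed
  qed
  have ftc: "\<And>x. integral {0..1} (\<lambda>s. g' (x + s *\<^sub>R e)) = g (x + e) - g x"
  proof -
    fix x
    have "((\<lambda>s. g' (x + s *\<^sub>R e)) has_integral (g (x + 1 *\<^sub>R e) - g (x + 0 *\<^sub>R e))) {0..1}"
    proof (rule fundamental_theorem_of_calculus)
      fix s :: real assume "s \<in> {0..1}"
      show "((\<lambda>s. g (x + s *\<^sub>R e)) has_vector_derivative g' (x + s *\<^sub>R e)) (at s within {0..1})"
        using LD_at[OF LD, of x s] unfolding e_def
        by (simp add: has_real_derivative_iff_has_vector_derivative has_vector_derivative_at_within)
    qed simp
    thus "integral {0..1} (\<lambda>s. g' (x + s *\<^sub>R e)) = g (x + e) - g x" by (simp add: integral_unique)
  qed
  have ig: "\<And>S. g integrable_on cbox (-a) a" using cg by (intro integrable_continuous) (auto intro: continuous_on_subset)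
  have zg: "\<And>x. x \<notin> K \<Longrightarrow> g x = 0" "\<And>x. x \<notin> K \<Longrightarrow> g' x = 0" using z by auto
  have i1: "integral Q (\<lambda>x. g (x + e)) = integral UNIV g"
  proof -
    have "integral Q (\<lambda>x. g (x + e)) = integral Q (g \<circ> (+) e)" by (simp add: o_def add.commute)
    also have "\<dots> = integral (cbox (-a - e + e) (a + e)) g" unfolding Q_def by (rule integral_shift_cbox_plus)
    also have "\<dots> = integral UNIV g" using int_supp(2)[OF cg zg(1) KQ[of 1]] by simp
    finally show ?thesis .
  qed
  have i2: "integral Q g = integral UNIV g"
    using int_supp(2)[OF cg zg(1) KQ[of 0]] by (simp add: Q_def)
  have "integral Q (\<lambda>x. integral {0..1} (\<lambda>s. g' (x + s *\<^sub>R e))) = integral Q (\<lambda>x. g (x + e) - g x)"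
    using ftc by simp
  also have "\<dots> = integral Q (\<lambda>x. g (x + e)) - integral Q g"
  proof (rule integral_diff)
    show "(\<lambda>x. g (x + e)) integrable_on Q" unfolding Q_def
      by (intro integrable_continuous continuous_on_compose2[OF cg]) (auto intro!: continuous_intros)
    show "g integrable_on Q" unfolding Q_def using cg by (intro integrable_continuous) (auto intro: continuous_on_subset)
  qed
  also have "\<dots> = 0" using i1 i2 by simp
  finally have L: "integral Q (\<lambda>x. integral {0..1} (\<lambda>s. g' (x + s *\<^sub>R e))) = 0" .
  have "integral Q (\<lambda>x. integral (cbox 0 1) (\<lambda>s. g' (x + s *\<^sub>R e))) = integral (cbox 0 1) (\<lambda>s. integral Q (\<lambda>x. g' (x + s *\<^sub>R e)))"
    unfolding Q_def by (rule integral_swap_continuous[where f="\<lambda>x s. g' (x + s *\<^sub>R e)"]) (rule cont_line2[OF cg'])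
  also have "\<dots> = integral (cbox 0 (1::real)) (\<lambda>s. integral UNIV g')"
  proof (rule integral_cong)
    fix s :: real assume "s \<in> cbox 0 1"
    hence s: "0 \<le> s" "s \<le> 1" by auto
    have "integral Q (\<lambda>x. g' (x + s *\<^sub>R e)) = integral Q (g' \<circ> (+) (s *\<^sub>R e))" by (simp add: o_def add.commute)
    also have "\<dots> = integral (cbox (-a - e + s *\<^sub>R e) (a + s *\<^sub>R e)) g'" unfolding Q_def by (rule integral_shift_cbox_plus)
    also have "\<dots> = integral UNIV g'" using int_supp(2)[OF cg' zg(2) KQ[OF s]] by simp
    finally show "integral Q (\<lambda>x. g' (x + s *\<^sub>R e)) = integral UNIV g'" .
  qed
  also have "\<dots> = integral UNIV g'" by (simp add: cbox_interval)
  finally show ?thesis using L by (simp add: cbox_interval)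
qed


lemma adm_facts:
  fixes w :: "real^'n \<Rightarrow> real"
  assumes sm: "smooth_fun w" and cs: "compact_support w"
  defines "K \<equiv> closure {x. w x \<noteq> 0}"
  shows "compact K" "closed K" "\<And>x. x \<notin> K \<Longrightarrow> w x = 0"
    "\<And>x i. x \<notin> K \<Longrightarrow> partial_deriv i w x = 0"
    "continuous_on UNIV w" "\<And>i. continuous_on UNIV (partial_deriv i w)"
    "\<And>i. LD i w (partial_deriv i w)"
proof -
  show "compact K" using cs by (simp add: K_def compact_support_def)
  show "closed K" by (simp add: K_def)
  show w0: "\<And>x. x \<notin> K \<Longrightarrow> w x = 0"
  proof -
    fix x assume "x \<notin> K"
    thus "w x = 0" unfolding K_def using closure_subset[of "{x. w x \<noteq> 0}"] by auto
  qed
  show "\<And>x i. x \<notin> K \<Longrightarrow> partial_deriv i w x = 0"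
  proof -
    fix x i assume x: "x \<notin> K"
    have "iter_partial [i] w x = 0" by (rule iter_zero_outside[OF \<open>closed K\<close> w0 x])
    thus "partial_deriv i w x = 0" by simp
  qed
  show "continuous_on UNIV w" using smooth_cont[OF sm, of "[]"] by simp
  show "\<And>i. continuous_on UNIV (partial_deriv i w)" using smooth_cont[OF sm, of "[_]"] by simp
  show "\<And>i. LD i w (partial_deriv i w)" using smooth_LD[OF sm, of _ "[]"] by simp
qed


lemma LD_recip:
  fixes i :: "'n::finite"
  shows "LD i (\<lambda>x. 1 / (1 + norm x ^ 2)) (\<lambda>x. - (2 * x $ i) / (1 + norm x ^ 2) ^ 2)"
proof -
  have "\<And>x. ((\<lambda>t. inverse (1 + (norm x ^ 2 + 2 * t * x $ i + t ^ 2))) has_real_derivative - (2 * x $ i) / (1 + norm x ^ 2) ^ 2) (at 0)"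
  proof -
    fix x :: "real^'n"
    have d1: "((\<lambda>t. t ^ 2) has_real_derivative 0) (at (0::real))" using DERIV_pow[of 2 0] by simp
    have d2: "((\<lambda>t. (2 * x $ i) * t) has_real_derivative 2 * x $ i) (at 0)" by (rule DERIV_cmult_Id)
    have d3: "((\<lambda>t. 1 + norm x ^ 2 + ((2 * x $ i) * t + t ^ 2)) has_real_derivative 0 + (2 * x $ i + 0)) (at 0)"
      by (rule DERIV_add[OF DERIV_const DERIV_add[OF d2 d1]])
    have e: "(\<lambda>t. 1 + norm x ^ 2 + ((2 * x $ i) * t + t ^ 2)) = (\<lambda>t. 1 + (norm x ^ 2 + 2 * t * x $ i + t ^ 2))"
      by (rule ext) (simp add: algebra_simps)
    have D: "((\<lambda>t. 1 + (norm x ^ 2 + 2 * t * x $ i + t ^ 2)) has_real_derivative 2 * x $ i) (at 0)"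
      using d3 unfolding e by simp
    have nz: "1 + (norm x ^ 2 + 2 * 0 * x $ i + 0 ^ 2) \<noteq> 0"
      using zero_le_power2[of "norm x"] by (simp; linarith)
    have v: "- (2 * x $ i * inverse ((1 + (norm x ^ 2 + 2 * 0 * x $ i + 0 ^ 2)) ^ Suc (Suc 0))) = - (2 * x $ i) / (1 + norm x ^ 2) ^ 2"
      by (simp add: divide_inverse power2_eq_square inverse_mult_distrib)
    show "((\<lambda>t. inverse (1 + (norm x ^ 2 + 2 * t * x $ i + t ^ 2))) has_real_derivative - (2 * x $ i) / (1 + norm x ^ 2) ^ 2) (at 0)"
      using DERIV_inverse_fun[OF D nz] unfolding v .
  qed
  thus ?thesis unfolding LD_def norm_sq_line by (simp add: divide_inverse)
qed
lemma cont_q: "continuous_on UNIV (\<lambda>x::real^'n. 1 / (1 + norm x ^ 2))"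
proof -
  have "\<And>x::real^'n. 1 + norm x ^ 2 \<noteq> 0" by (smt (verit) zero_le_power2)
  thus ?thesis by (intro continuous_intros) auto
qed




lemma amgm_key:
  fixes w S P r2 :: real
  assumes P: "0 \<le> P" and r2: "0 \<le> r2" and CS: "S ^ 2 \<le> r2 * P"
  shows "- (2 * w * S / (1 + r2)) \<le> w ^ 2 / (2 * (1 + r2)) + 2 * P"
proof -
  define q where "q = 1 + r2"
  have q: "0 < q" "r2 \<le> q" using r2 by (auto simp: q_def)
  have "(2 * \<bar>w * S\<bar>) ^ 2 = 4 * w ^ 2 * S ^ 2" by (simp add: power2_eq_square abs_mult_self_eq algebra_simps)
  also have "\<dots> \<le> 4 * w ^ 2 * (r2 * P)" using CS by (intro mult_left_mono) auto
  also have "\<dots> \<le> 4 * w ^ 2 * (q * P)" using q P by (intro mult_left_mono mult_right_mono) auto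
  also have "\<dots> \<le> (w ^ 2 / 2 + 2 * q * P) ^ 2"
  proof -
    have "0 \<le> (w ^ 2 / 2 - 2 * q * P) ^ 2" by simp
    thus ?thesis by (simp add: power2_eq_square algebra_simps)
  qed
  finally have "2 * \<bar>w * S\<bar> \<le> w ^ 2 / 2 + 2 * q * P"
    by (rule power2_le_imp_le) (use q P in auto)
  hence "- (2 * w * S) \<le> w ^ 2 / 2 + 2 * q * P" by linarith
  hence "- (2 * w * S) / q \<le> (w ^ 2 / 2 + 2 * q * P) / q" using q by (intro divide_right_mono) auto
  also have "\<dots> = w ^ 2 / (2 * q) + 2 * P" using q by (simp add: field_simps)
  finally show ?thesis by (simp add: q_def)
qed

lemma pointwise_hardy:
  fixes w S P r2 :: real and N :: nat
  assumes P: "0 \<le> P" and r2: "0 \<le> r2" and CS: "S ^ 2 \<le> r2 * P" and N: "3 \<le> N"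
  shows "w ^ 2 / (2 * (1 + r2)) \<le> 2 * w * S / (1 + r2) + w ^ 2 * (real N / (1 + r2) - 2 * r2 / (1 + r2) ^ 2) + 2 * P"
proof -
  define q where "q = 1 + r2"
  have q: "0 < q" using r2 by (simp add: q_def)
  have "1 / q \<le> real N / q - 2 * r2 / q ^ 2"
  proof -
    have N3: "3 \<le> real N" using N by simp
    have "3 * q \<le> real N * q" using mult_right_mono[OF N3, of q] q by simp
    hence "q \<le> real N * q - 2 * r2" using r2 by (simp add: q_def)
    hence "q / q ^ 2 \<le> (real N * q - 2 * r2) / q ^ 2" using q by (intro divide_right_mono) auto
    moreover have "q / q ^ 2 = 1 / q" using q by (simp add: power2_eq_square)
    moreover have "(real N * q - 2 * r2) / q ^ 2 = real N / q - 2 * r2 / q ^ 2"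
      using q by (simp add: diff_divide_distrib power2_eq_square)
    ultimately show ?thesis by simp
  qed
  hence "w ^ 2 * (1 / q) \<le> w ^ 2 * (real N / q - 2 * r2 / q ^ 2)" by (intro mult_left_mono) auto
  moreover have "- (2 * w * S / q) \<le> w ^ 2 / (2 * q) + 2 * P" using amgm_key[OF P r2 CS, of w] by (simp add: q_def)
  moreover have "w ^ 2 * (1 / q) = w ^ 2 / (2 * q) + w ^ 2 / (2 * q)" by (simp add: field_simps)
  ultimately have "w ^ 2 / (2 * q) \<le> 2 * w * S / q + w ^ 2 * (real N / q - 2 * r2 / q ^ 2) + 2 * P"
    by linarith
  thus ?thesis by (simp only: q_def)
qed

lemma int_K:
  fixes f :: "real^'n \<Rightarrow> real"
  assumes "continuous_on UNIV f" "compact K" "\<And>x. x \<notin> K \<Longrightarrow> f x = 0"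
  shows "f integrable_on UNIV"
proof -
  obtain a where "K \<subseteq> cbox (-a) a" using compact_imp_bounded[OF assms(2)] bounded_subset_cbox_symmetric by metis
  thus ?thesis using int_supp(1)[OF assms(1) assms(3)] by blast
qed

lemma hardy:
  fixes w :: "real^'n \<Rightarrow> real"
  assumes sm: "smooth_fun w" and cs: "compact_support w" and N: "3 \<le> CARD('n)"
  shows "integral UNIV (\<lambda>x. w x ^ 2 / (1 + norm x ^ 2)) \<le> 4 * integral UNIV (\<lambda>x. \<Sum>i\<in>UNIV. (partial_deriv i w x) ^ 2)"
proof -
  define K where "K = closure {x. w x \<noteq> 0}"
  note AF = adm_facts[OF sm cs, folded K_def]
  have cK: "compact K" and w0: "\<And>x. x \<notin> K \<Longrightarrow> w x = 0" and p0: "\<And>x i. x \<notin> K \<Longrightarrow> partial_deriv i w x = 0"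
    and cw: "continuous_on UNIV w" and cp: "\<And>i. continuous_on UNIV (partial_deriv i w)"
    and LDw: "\<And>i. LD i w (partial_deriv i w)" using AF by auto
  define q where "q = (\<lambda>x::real^'n. 1 / (1 + norm x ^ 2))"
  have cq: "continuous_on UNIV q" unfolding q_def by (rule cont_q)
  define p where "p = (\<lambda>i. partial_deriv i w)"
  define g' where "g' = (\<lambda>i x. (p i x * w x + w x * p i x) * (x $ i * q x)
     + (w x * w x) * ((if i = i then 1 else 0) * q x + x $ i * (- (2 * x $ i) / (1 + norm x ^ 2) ^ 2)))"
  have IBPi: "\<And>i. integral UNIV (g' i) = 0"
  proof -
    fix i
    have LDV: "LD i (\<lambda>x. x $ i * q x) (\<lambda>x. (if i = i then 1 else 0) * q x + x $ i * (- (2 * x $ i) / (1 + norm x ^ 2) ^ 2))"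
      unfolding q_def by (rule LD_mult[OF LD_coord LD_recip])
    have LDg: "LD i (\<lambda>x. (w x * w x) * (x $ i * q x)) (g' i)"
      unfolding g'_def p_def by (rule LD_mult[OF LD_mult[OF LDw LDw] LDV])
    have c1: "continuous_on UNIV (\<lambda>x. (w x * w x) * (x $ i * q x))"
      by (intro continuous_intros cw cq)
    have c2: "continuous_on UNIV (\<lambda>x. - (2 * x $ i) / (1 + norm x ^ 2) ^ 2)"
    proof -
      have "\<And>x::real^'n. (1 + norm x ^ 2) ^ 2 \<noteq> 0" using zero_le_power2 by (simp; smt (verit))
      thus ?thesis by (intro continuous_intros) auto
    qed
    have c3: "continuous_on UNIV (g' i)"
      unfolding g'_def p_def by (intro continuous_intros cw cq cp c2)
    show "integral UNIV (g' i) = 0"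
      by (rule IBP[OF LDg c1 c3 cK]) (use w0 p0 in \<open>simp add: g'_def p_def\<close>)
  qed
  have cg': "\<And>i. continuous_on UNIV (g' i)"
  proof -
    fix i :: 'n
    have c2: "continuous_on UNIV (\<lambda>x. - (2 * x $ i) / (1 + norm x ^ 2) ^ 2)"
    proof -
      have "\<And>x::real^'n. (1 + norm x ^ 2) ^ 2 \<noteq> 0" using zero_le_power2 by (simp; smt (verit))
      thus ?thesis by (intro continuous_intros) auto
    qed
    show "continuous_on UNIV (g' i)"
      unfolding g'_def p_def by (intro continuous_intros cw cq cp c2)
  qed
  have ig': "\<And>i. g' i integrable_on UNIV"
    by (rule int_K[OF cg' cK]) (use w0 p0 in \<open>simp add: g'_def p_def\<close>)
  define P where "P = (\<lambda>x. \<Sum>i\<in>UNIV. (p i x) ^ 2)"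
  have cP: "continuous_on UNIV P" unfolding P_def p_def by (intro continuous_intros cp)
  have iP: "P integrable_on UNIV" by (rule int_K[OF cP cK]) (use p0 in \<open>simp add: P_def p_def\<close>)
  define h where "h = (\<lambda>x. w x ^ 2 / (1 + norm x ^ 2))"
  have hq: "h = (\<lambda>x. w x ^ 2 * q x)" by (auto simp: h_def q_def)
  have ch: "continuous_on UNIV h" unfolding hq by (intro continuous_intros cw cq)
  have ih: "h integrable_on UNIV" by (rule int_K[OF ch cK]) (use w0 in \<open>simp add: h_def\<close>)
  have pw: "\<And>x. h x / 2 \<le> (\<Sum>i\<in>UNIV. g' i x) + 2 * P x"
  proof -
    fix x :: "real^'n"
    define r2 where "r2 = norm x ^ 2"
    define S where "S = (\<Sum>i\<in>UNIV. p i x * x $ i)"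
    have r20: "0 \<le> r2" by (simp add: r2_def)
    have P0: "0 \<le> P x" by (simp add: P_def sum_nonneg)
    have gi: "\<And>i. g' i x = 2 * w x * (p i x * x $ i) / (1 + r2) + w x ^ 2 * (1 / (1 + r2)) - w x ^ 2 * (2 * (x $ i) ^ 2 / (1 + r2) ^ 2)"
      by (simp add: g'_def q_def r2_def power2_eq_square algebra_simps add_divide_distrib diff_divide_distrib)
    have "(\<Sum>i\<in>UNIV. g' i x) = (\<Sum>i\<in>UNIV. 2 * w x * (p i x * x $ i) / (1 + r2)) + (\<Sum>i\<in>(UNIV::'n set). w x ^ 2 * (1 / (1 + r2))) - (\<Sum>i\<in>UNIV. w x ^ 2 * (2 * (x $ i) ^ 2 / (1 + r2) ^ 2))"
      unfolding gi by (simp add: sum.distrib sum_subtractf)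
    also have "\<dots> = 2 * w x * S / (1 + r2) + w x ^ 2 * (real CARD('n) / (1 + r2)) - w x ^ 2 * (2 * r2 / (1 + r2) ^ 2)"
    proof -
      have a: "(\<Sum>i\<in>UNIV. 2 * w x * (p i x * x $ i) / (1 + r2)) = 2 * w x * S / (1 + r2)"
        by (simp add: S_def sum_distrib_left[symmetric] sum_divide_distrib[symmetric])
      have b: "(\<Sum>i\<in>(UNIV::'n set). w x ^ 2 * (1 / (1 + r2))) = w x ^ 2 * (real CARD('n) / (1 + r2))" by simp
      have c: "(\<Sum>i\<in>UNIV. w x ^ 2 * (2 * (x $ i) ^ 2 / (1 + r2) ^ 2)) = w x ^ 2 * (2 * r2 / (1 + r2) ^ 2)"
        by (simp add: r2_def norm_sq_sum sum_distrib_left[symmetric] sum_divide_distrib[symmetric])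
      show ?thesis unfolding a b c ..
    qed
    finally have F: "(\<Sum>i\<in>UNIV. g' i x) = 2 * w x * S / (1 + r2) + w x ^ 2 * (real CARD('n) / (1 + r2) - 2 * r2 / (1 + r2) ^ 2)"
      by (simp add: algebra_simps)
    have CS: "S ^ 2 \<le> r2 * P x"
    proof -
      have "(inner (\<chi> i. p i x) x) ^ 2 \<le> inner (\<chi> i. p i x) (\<chi> i. p i x) * inner x x"
        by (rule Cauchy_Schwarz_ineq)
      moreover have "inner (\<chi> i. p i x) x = S" by (simp add: inner_vec_def S_def)
      moreover have "inner (\<chi> i. p i x) (\<chi> i. p i x) = P x" by (simp add: inner_vec_def P_def power2_eq_square)
      moreover have "inner x x = r2" by (simp add: r2_def power2_norm_eq_inner)
      ultimately show ?thesis by (simp add: mult.commute)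
    qed
    have "w x ^ 2 / (2 * (1 + r2)) \<le> 2 * w x * S / (1 + r2) + w x ^ 2 * (real CARD('n) / (1 + r2) - 2 * r2 / (1 + r2) ^ 2) + 2 * P x"
      by (rule pointwise_hardy[OF P0 r20 CS N])
    moreover have "h x / 2 = w x ^ 2 / (2 * (1 + r2))" by (simp add: h_def r2_def)
    ultimately show "h x / 2 \<le> (\<Sum>i\<in>UNIV. g' i x) + 2 * P x" unfolding F by linarith
  qed
  have isum: "(\<lambda>x. (\<Sum>i\<in>UNIV. g' i x) + 2 * P x) integrable_on UNIV"
    by (intro integrable_add integrable_sum ig' integrable_cmul iP) (auto intro: iP)
  have "integral UNIV (\<lambda>x. h x / 2) \<le> integral UNIV (\<lambda>x. (\<Sum>i\<in>UNIV. g' i x) + 2 * P x)"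
    by (rule integral_le[OF _ isum]) (use pw ih in \<open>auto intro: integrable_divide\<close>)
  also have "\<dots> = (\<Sum>i\<in>UNIV. integral UNIV (g' i)) + 2 * integral UNIV P"
    using ig' iP by (simp add: integral_add integrable_sum integral_sum)
  also have "\<dots> = 2 * integral UNIV P" using IBPi by simp
  finally have "integral UNIV h / 2 \<le> 2 * integral UNIV P" by simp
  thus ?thesis by (simp add: h_def P_def p_def)
qed

definition dlt :: "'n::finite itself \<Rightarrow> real" where
  "dlt _ = 1 / (2 * real CARD('n))"

definition cyl1 :: "'n::finite itself \<Rightarrow> (real^'n) set" where
  "cyl1 T = cbox (\<chi> i. if i = undefined then 0 else - dlt T) (\<chi> i. if i = undefined then 1 else dlt T)"

definition cyl2 :: "'n::finite itself \<Rightarrow> (real^'n) set" where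
  "cyl2 T = cbox (\<chi> i. if i = undefined then -1 else - dlt T) (\<chi> i. if i = undefined then 1 else dlt T)"

lemma dlt_pos: "0 < dlt TYPE('n::finite)"
  by (simp add: dlt_def)

lemma proj_in_disc:
  fixes x :: "real^'n::finite"
  assumes x: "x \<in> cyl1 TYPE('n)"
  shows "x - (x $ undefined) *\<^sub>R axis undefined 1 \<in> flat_disc TYPE('n)"
proof -
  define y where "y = x - (x $ undefined) *\<^sub>R axis undefined (1::real)"
  have H: "\<And>i. (if i = undefined then 0 else - dlt TYPE('n)) \<le> x $ i \<and> x $ i \<le> (if i = undefined then 1 else dlt TYPE('n))"
    using x by (simp add: cyl1_def mem_box_cart)
  have xc: "\<And>i. i \<noteq> undefined \<Longrightarrow> \<bar>x $ i\<bar> \<le> dlt TYPE('n)"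
  proof -
    fix i :: 'n assume "i \<noteq> undefined"
    thus "\<bar>x $ i\<bar> \<le> dlt TYPE('n)" using H[of i] by (simp add: abs_le_iff)
  qed
  have yc: "\<And>i. y $ i = (if i = undefined then 0 else x $ i)" by (simp add: y_def axis_def)
  have yb: "\<And>i. \<bar>y $ i\<bar> \<le> dlt TYPE('n)" using xc dlt_pos[where 'n='n] by (simp add: yc less_imp_le)
  have "norm y \<le> (\<Sum>i\<in>UNIV. \<bar>y $ i\<bar>)" by (rule norm_le_l1_cart)
  also have "\<dots> \<le> (\<Sum>i\<in>(UNIV::'n set). dlt TYPE('n))" by (rule sum_mono) (rule yb)
  also have "\<dots> = 1 / 2" by (simp add: dlt_def)
  finally have "norm y < 1" by simp
  moreover have "y $ undefined = 0" by (simp add: yc)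
  ultimately show ?thesis by (simp add: flat_disc_def y_def)
qed

lemma cyl_pointwise:
  fixes w :: "real^'n::finite \<Rightarrow> real"
  assumes LDw: "LD undefined w p" and cp: "continuous_on UNIV p"
    and one: "\<forall>x \<in> flat_disc TYPE('n). w x = 1" and x: "x \<in> cyl1 TYPE('n)"
  shows "1 \<le> \<bar>w x\<bar> + integral {-1..0} (\<lambda>s. \<bar>p (x + s *\<^sub>R axis undefined 1)\<bar>)"
proof -
  define e where "e = axis (undefined::'n) (1::real)"
  define a where "a = x $ undefined"
  have H: "\<And>i. (if i = undefined then 0 else - dlt TYPE('n)) \<le> x $ i \<and> x $ i \<le> (if i = undefined then 1 else dlt TYPE('n))"
    using x by (simp add: cyl1_def mem_box_cart)
  have a: "0 \<le> a" "a \<le> 1" using H[of undefined] by (auto simp: a_def)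
  have wy: "w (x + (-a) *\<^sub>R e) = 1" using proj_in_disc[OF x] one by (simp add: e_def a_def)
  have cpl: "continuous_on S (\<lambda>s. p (x + s *\<^sub>R e))" for S
    by (rule continuous_on_compose2[OF cp]) (auto intro!: continuous_intros)
  have "((\<lambda>s. p (x + s *\<^sub>R e)) has_integral (w (x + 0 *\<^sub>R e) - w (x + (-a) *\<^sub>R e))) {-a..0}"
  proof (rule fundamental_theorem_of_calculus)
    show "- a \<le> 0" using a by simp
    fix s :: real assume "s \<in> {-a..0}"
    show "((\<lambda>s. w (x + s *\<^sub>R e)) has_vector_derivative p (x + s *\<^sub>R e)) (at s within {-a..0})"
      using LD_at[OF LDw, of x s] unfolding e_def
      by (simp add: has_real_derivative_iff_has_vector_derivative has_vector_derivative_at_within)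
  qed
  hence I: "integral {-a..0} (\<lambda>s. p (x + s *\<^sub>R e)) = w x - 1" using wy by (simp add: integral_unique)
  have "\<bar>w x - 1\<bar> \<le> integral {-a..0} (\<lambda>s. \<bar>p (x + s *\<^sub>R e)\<bar>)"
    unfolding I[symmetric] using integral_norm_bound_integral[of "\<lambda>s. p (x + s *\<^sub>R e)" "{-a..0}" "\<lambda>s. \<bar>p (x + s *\<^sub>R e)\<bar>"]
    by (simp add: integrable_continuous_interval cpl continuous_on_rabs)
  also have "\<dots> \<le> integral {-1..0} (\<lambda>s. \<bar>p (x + s *\<^sub>R e)\<bar>)"
    by (rule integral_subset_le) (use a in \<open>auto intro!: integrable_continuous_interval continuous_intros cpl\<close>)
  finally show ?thesis unfolding e_def by linarith
qed

lemma cyl_integral: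
  fixes w :: "real^'n::finite \<Rightarrow> real"
  assumes LDw: "LD undefined w p" and cp: "continuous_on UNIV p" and cw: "continuous_on UNIV w"
    and one: "\<forall>x \<in> flat_disc TYPE('n). w x = 1"
  shows "measure lborel (cyl1 TYPE('n)) \<le> integral (cyl1 TYPE('n)) (\<lambda>x. \<bar>w x\<bar>) + integral (cyl2 TYPE('n)) (\<lambda>x. \<bar>p x\<bar>)"
proof -
  define e where "e = axis (undefined::'n) (1::real)"
  define lo where "lo = (\<chi> i::'n. if i = undefined then 0 else - dlt TYPE('n))"
  define hi where "hi = (\<chi> i::'n. if i = undefined then 1 else dlt TYPE('n))"
  have C1: "cyl1 TYPE('n) = cbox lo hi" by (simp add: cyl1_def lo_def hi_def)
  define F where "F = (\<lambda>x s. \<bar>p (x + s *\<^sub>R e)\<bar>)"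
  have cF: "continuous_on S (\<lambda>(x, s). F x s)" for S
  proof -
    have "continuous_on S (\<lambda>(x, s::real). p (x + s *\<^sub>R e))" by (rule cont_line2[OF cp])
    hence "continuous_on S (\<lambda>z. \<bar>(\<lambda>(x, s::real). p (x + s *\<^sub>R e)) z\<bar>)" by (rule continuous_on_rabs)
    thus ?thesis by (simp add: F_def case_prod_beta)
  qed
  define G where "G = (\<lambda>x. integral (cbox (-1) 0) (F x))"
  have cG: "continuous_on UNIV G" unfolding G_def
    by (rule integral_continuous_on_param) (rule cF)
  have cH: "continuous_on UNIV (\<lambda>s. integral (cbox lo hi) (\<lambda>x. F x s))"
  proof (rule integral_continuous_on_param)
    have "continuous_on (UNIV \<times> cbox lo hi) (\<lambda>z. p (snd z + fst z *\<^sub>R e))"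
      by (rule continuous_on_compose2[OF cp]) (auto intro!: continuous_intros)
    hence "continuous_on (UNIV \<times> cbox lo hi) (\<lambda>z. \<bar>p (snd z + fst z *\<^sub>R e)\<bar>)" by (rule continuous_on_rabs)
    thus "continuous_on (UNIV \<times> cbox lo hi) (\<lambda>(s, x). F x s)" by (simp add: F_def case_prod_beta)
  qed
  have cwa: "continuous_on UNIV (\<lambda>x. \<bar>w x\<bar>)" by (rule continuous_on_rabs[OF cw])
  have pt: "\<And>x. x \<in> cbox lo hi \<Longrightarrow> 1 \<le> \<bar>w x\<bar> + G x"
    using cyl_pointwise[OF LDw cp one] C1 by (simp add: G_def F_def e_def cbox_interval)
  have "measure lborel (cbox lo hi) = integral (cbox lo hi) (\<lambda>x. 1::real)" by simp
  also have "\<dots> \<le> integral (cbox lo hi) (\<lambda>x. \<bar>w x\<bar> + G x)"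
    by (rule integral_le) (use pt cwa cG cw in \<open>auto intro!: integrable_continuous continuous_intros intro: continuous_on_subset\<close>)
  also have "\<dots> = integral (cbox lo hi) (\<lambda>x. \<bar>w x\<bar>) + integral (cbox lo hi) G"
    by (rule integral_add) (use cwa cG in \<open>auto intro!: integrable_continuous intro: continuous_on_subset\<close>)
  also have "integral (cbox lo hi) G = integral (cbox (-1) 0) (\<lambda>s. integral (cbox lo hi) (\<lambda>x. F x s))"
    unfolding G_def by (rule integral_swap_continuous) (rule cF)
  also have "\<dots> \<le> integral (cbox (-1::real) 0) (\<lambda>s. integral (cyl2 TYPE('n)) (\<lambda>x. \<bar>p x\<bar>))"
  proof (rule integral_le)
    show "(\<lambda>s. integral (cbox lo hi) (\<lambda>x. F x s)) integrable_on cbox (-1) 0"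
      using cH by (intro integrable_continuous) (auto intro: continuous_on_subset)
    show "(\<lambda>s. integral (cyl2 TYPE('n)) (\<lambda>x. \<bar>p x\<bar>)) integrable_on cbox (-1::real) 0" by (rule integrable_const)
    fix s :: real assume "s \<in> cbox (-1) 0"
    hence s: "-1 \<le> s" "s \<le> 0" by auto
    have "integral (cbox lo hi) (\<lambda>x. F x s) = integral (cbox lo hi) ((\<lambda>x. \<bar>p x\<bar>) \<circ> (+) (s *\<^sub>R e))"
      by (simp add: F_def o_def add.commute)
    also have "\<dots> = integral (cbox (lo + s *\<^sub>R e) (hi + s *\<^sub>R e)) (\<lambda>x. \<bar>p x\<bar>)"
      by (rule integral_shift_cbox_plus)
    also have "\<dots> \<le> integral (cyl2 TYPE('n)) (\<lambda>x. \<bar>p x\<bar>)"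
    proof (rule integral_subset_le)
      show "cbox (lo + s *\<^sub>R e) (hi + s *\<^sub>R e) \<subseteq> cyl2 TYPE('n)"
      proof
        fix x assume "x \<in> cbox (lo + s *\<^sub>R e) (hi + s *\<^sub>R e)"
        hence H: "\<And>i. (lo + s *\<^sub>R e) $ i \<le> x $ i \<and> x $ i \<le> (hi + s *\<^sub>R e) $ i" by (simp add: mem_box_cart)
        have "\<And>i. (if i = undefined then -1 else - dlt TYPE('n)) \<le> x $ i \<and> x $ i \<le> (if i = undefined then 1 else dlt TYPE('n))"
        proof -
          fix i :: 'n
          show "(if i = undefined then -1 else - dlt TYPE('n)) \<le> x $ i \<and> x $ i \<le> (if i = undefined then 1 else dlt TYPE('n))"
            using H[of i] s by (cases "i = undefined") (auto simp: lo_def hi_def e_def axis_def)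
        qed
        thus "x \<in> cyl2 TYPE('n)" by (simp add: cyl2_def mem_box_cart)
      qed
      show "(\<lambda>x. \<bar>p x\<bar>) integrable_on cbox (lo + s *\<^sub>R e) (hi + s *\<^sub>R e)"
        using cp by (intro integrable_continuous continuous_intros) (auto intro: continuous_on_subset)
      show "(\<lambda>x. \<bar>p x\<bar>) integrable_on cyl2 TYPE('n)" unfolding cyl2_def
        using cp by (intro integrable_continuous continuous_intros) (auto intro: continuous_on_subset)
    qed simp
    finally show "integral (cbox lo hi) (\<lambda>x. F x s) \<le> integral (cyl2 TYPE('n)) (\<lambda>x. \<bar>p x\<bar>)" .
  qed
  also have "\<dots> = integral (cyl2 TYPE('n)) (\<lambda>x. \<bar>p x\<bar>)" by simp
  finally show ?thesis unfolding C1 by simp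
qed

lemma cyl1_cbox: "cyl1 TYPE('n::finite) = cbox (\<chi> i::'n. if i = undefined then 0 else - dlt TYPE('n)) (\<chi> i. if i = undefined then 1 else dlt TYPE('n))"
  by (simp add: cyl1_def)

lemma cyl2_cbox: "cyl2 TYPE('n::finite) = cbox (\<chi> i::'n. if i = undefined then -1 else - dlt TYPE('n)) (\<chi> i. if i = undefined then 1 else dlt TYPE('n))"
  by (simp add: cyl2_def)

lemma V1_pos: "0 < measure lborel (cyl1 TYPE('n::finite))"
  unfolding cyl1_cbox
proof (rule content_pos_lt, intro ballI)
  fix b :: "real^'n" assume "b \<in> Basis"
  then obtain j where j: "b = axis j 1" by (auto simp: Basis_vec_def)
  show "(\<chi> i::'n. if i = undefined then 0 else - dlt TYPE('n)) \<bullet> b < (\<chi> i. if i = undefined then 1 else dlt TYPE('n)) \<bullet> b"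
    using dlt_pos[where 'n='n] by (simp add: j inner_axis)
qed

lemma V2_nonneg: "0 \<le> measure lborel (cyl2 TYPE('n::finite))"
  by simp

lemma cyl1_norm:
  fixes x :: "real^'n::finite"
  assumes "x \<in> cyl1 TYPE('n)"
  shows "1 + norm x ^ 2 \<le> 4"
proof -
  have H: "\<And>i. (if i = undefined then 0 else - dlt TYPE('n)) \<le> x $ i \<and> x $ i \<le> (if i = undefined then 1 else dlt TYPE('n))"
    using assms by (simp add: cyl1_def mem_box_cart)
  have b: "\<And>i. \<bar>x $ i\<bar> \<le> (if i = undefined then 1 else 0) + dlt TYPE('n)"
  proof -
    fix i :: 'n
    show "\<bar>x $ i\<bar> \<le> (if i = undefined then 1 else 0) + dlt TYPE('n)"
      using H[of i] dlt_pos[where 'n='n] by (cases "i = undefined") auto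
  qed
  have "norm x \<le> (\<Sum>i\<in>UNIV. \<bar>x $ i\<bar>)" by (rule norm_le_l1_cart)
  also have "\<dots> \<le> (\<Sum>i\<in>(UNIV::'n set). (if i = undefined then 1 else 0) + dlt TYPE('n))" by (rule sum_mono) (rule b)
  also have "\<dots> = 1 + 1 / 2" by (simp add: sum.distrib dlt_def)
  finally have n: "norm x \<le> 3 / 2" by simp
  have "norm x ^ 2 \<le> (3 / 2) ^ 2" using power_mono[OF n, of 2] by simp
  moreover have "(3 / 2 :: real) ^ 2 = 9 / 4" by (simp add: power2_eq_square)
  ultimately show ?thesis by linarith
qed

lemma amgm_abs: "0 < l \<Longrightarrow> \<bar>a::real\<bar> \<le> l / 2 * a ^ 2 + 1 / (2 * l)"
proof -
  assume l: "0 < l"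
  have "0 \<le> (l * \<bar>a\<bar> - 1) ^ 2" by simp
  hence "2 * l * \<bar>a\<bar> \<le> l ^ 2 * a ^ 2 + 1" by (simp add: power2_eq_square algebra_simps)
  hence "2 * l * \<bar>a\<bar> / (2 * l) \<le> (l ^ 2 * a ^ 2 + 1) / (2 * l)" using l by (intro divide_right_mono) auto
  thus ?thesis using l by (simp add: power2_eq_square field_simps)
qed

definition c0 :: "'n::finite itself \<Rightarrow> real" where
  "c0 T = measure lborel (cyl1 T) ^ 2 / (17 * (measure lborel (cyl1 T) + measure lborel (cyl2 T)))"

lemma c0_pos: "0 < c0 TYPE('n::finite)"
proof -
  have a: "0 < measure lborel (cyl1 TYPE('n))" by (rule V1_pos)
  have b: "0 \<le> measure lborel (cyl2 TYPE('n))" by (rule V2_nonneg)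
  have "0 < measure lborel (cyl1 TYPE('n)) + measure lborel (cyl2 TYPE('n))" by (rule add_pos_nonneg[OF a b])
  thus ?thesis unfolding c0_def using a by (intro divide_pos_pos mult_pos_pos) auto
qed

lemma energy_lower:
  fixes w :: "real^'n::finite \<Rightarrow> real"
  assumes sm: "smooth_fun w" and cs: "compact_support w" and one: "\<forall>x \<in> flat_disc TYPE('n). w x = 1"
    and N: "3 \<le> CARD('n)"
  shows "c0 TYPE('n) \<le> integral UNIV (\<lambda>x. \<Sum>i\<in>UNIV. (partial_deriv i w x) ^ 2)"
proof -
  define K where "K = closure {x. w x \<noteq> 0}"
  note AF = adm_facts[OF sm cs, folded K_def]
  have cK: "compact K" and w0: "\<And>x. x \<notin> K \<Longrightarrow> w x = 0" and p0: "\<And>x i. x \<notin> K \<Longrightarrow> partial_deriv i w x = 0"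
    and cw: "continuous_on UNIV w" and cp: "\<And>i. continuous_on UNIV (partial_deriv i w)"
    and LDw: "\<And>i. LD i w (partial_deriv i w)" using AF by auto
  define V1 where "V1 = measure lborel (cyl1 TYPE('n))"
  define V2 where "V2 = measure lborel (cyl2 TYPE('n))"
  have V1: "0 < V1" unfolding V1_def by (rule V1_pos)
  have V2: "0 \<le> V2" unfolding V2_def by (rule V2_nonneg)
  define l where "l = (V1 + V2) / V1"
  have l: "0 < l" using V1 V2 by (simp add: l_def)
  define P where "P = (\<lambda>x. \<Sum>i\<in>UNIV. (partial_deriv i w x) ^ 2)"
  define E where "E = integral UNIV P"
  define h where "h = (\<lambda>x. w x ^ 2 / (1 + norm x ^ 2))"
  define A where "A = integral UNIV h"
  define p where "p = partial_deriv undefined w"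
  have cP: "continuous_on UNIV P" unfolding P_def by (intro continuous_intros cp)
  have iP: "P integrable_on UNIV" by (rule int_K[OF cP cK]) (use p0 in \<open>simp add: P_def\<close>)
  have hq: "h = (\<lambda>x. w x ^ 2 * (1 / (1 + norm x ^ 2)))" by (auto simp: h_def)
  have ch: "continuous_on UNIV h" unfolding hq by (intro continuous_intros cw cont_q)
  have ih: "h integrable_on UNIV" by (rule int_K[OF ch cK]) (use w0 in \<open>simp add: h_def\<close>)
  have AE: "A \<le> 4 * E" using hardy[OF sm cs N] by (simp add: A_def E_def h_def P_def)
  have base: "V1 \<le> integral (cyl1 TYPE('n)) (\<lambda>x. \<bar>w x\<bar>) + integral (cyl2 TYPE('n)) (\<lambda>x. \<bar>p x\<bar>)"
    unfolding V1_def p_def by (rule cyl_integral[OF LDw cp cw one])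
  have b1: "integral (cyl1 TYPE('n)) (\<lambda>x. \<bar>w x\<bar>) \<le> 2 * l * A + V1 / (2 * l)"
  proof -
    have "integral (cyl1 TYPE('n)) (\<lambda>x. \<bar>w x\<bar>) \<le> integral (cyl1 TYPE('n)) (\<lambda>x. 2 * l * h x + 1 / (2 * l))"
    proof (rule integral_le)
      show "(\<lambda>x. \<bar>w x\<bar>) integrable_on cyl1 TYPE('n)" unfolding cyl1_cbox
        using cw by (intro integrable_continuous continuous_intros) (auto intro: continuous_on_subset)
      show "(\<lambda>x. 2 * l * h x + 1 / (2 * l)) integrable_on cyl1 TYPE('n)" unfolding cyl1_cbox
        using ch by (intro integrable_continuous continuous_intros) (auto intro: continuous_on_subset)
      fix x assume x: "x \<in> cyl1 TYPE('n)"
      have q: "1 + norm x ^ 2 \<le> 4" by (rule cyl1_norm[OF x])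
      have q0: "0 < 1 + norm x ^ 2" by (simp add: add_pos_nonneg)
      have "w x ^ 2 = h x * (1 + norm x ^ 2)" using q0 by (simp add: h_def)
      also have "\<dots> \<le> h x * 4" using q by (intro mult_left_mono) (auto simp: h_def)
      finally have "l / 2 * w x ^ 2 \<le> l / 2 * (h x * 4)" using l by (intro mult_left_mono) auto
      thus "\<bar>w x\<bar> \<le> 2 * l * h x + 1 / (2 * l)" using amgm_abs[OF l, of "w x"] by simp
    qed
    also have "\<dots> = 2 * l * integral (cyl1 TYPE('n)) h + V1 / (2 * l)"
    proof -
      have "integral (cyl1 TYPE('n)) (\<lambda>x. 2 * l * h x + 1 / (2 * l)) = integral (cyl1 TYPE('n)) (\<lambda>x. 2 * l * h x) + integral (cyl1 TYPE('n)) (\<lambda>x. 1 / (2 * l))"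
        unfolding cyl1_cbox by (rule integral_add) (use ch in \<open>auto intro!: integrable_continuous continuous_intros intro: continuous_on_subset\<close>)
      thus ?thesis unfolding V1_def by (simp add: cyl1_cbox)
    qed
    also have "\<dots> \<le> 2 * l * A + V1 / (2 * l)"
    proof -
      have "integral (cyl1 TYPE('n)) h \<le> integral UNIV h"
        by (rule integral_subset_le) (use ih ch in \<open>auto simp: h_def cyl1_cbox intro!: integrable_continuous intro: continuous_on_subset\<close>)
      thus ?thesis using l by (simp add: A_def)
    qed
    finally show ?thesis .
  qed
  have b2: "integral (cyl2 TYPE('n)) (\<lambda>x. \<bar>p x\<bar>) \<le> l / 2 * E + V2 / (2 * l)"
  proof -
    have "integral (cyl2 TYPE('n)) (\<lambda>x. \<bar>p x\<bar>) \<le> integral (cyl2 TYPE('n)) (\<lambda>x. l / 2 * P x + 1 / (2 * l))"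
    proof (rule integral_le)
      show "(\<lambda>x. \<bar>p x\<bar>) integrable_on cyl2 TYPE('n)" unfolding cyl2_cbox p_def
        using cp by (intro integrable_continuous continuous_intros) (auto intro: continuous_on_subset)
      show "(\<lambda>x. l / 2 * P x + 1 / (2 * l)) integrable_on cyl2 TYPE('n)" unfolding cyl2_cbox
        using cP by (intro integrable_continuous continuous_intros) (auto intro: continuous_on_subset)
      fix x assume x: "x \<in> cyl2 TYPE('n)"
      have "p x ^ 2 \<le> P x" unfolding P_def p_def
        by (rule member_le_sum) auto
      hence "l / 2 * p x ^ 2 \<le> l / 2 * P x" using l by (intro mult_left_mono) auto
      thus "\<bar>p x\<bar> \<le> l / 2 * P x + 1 / (2 * l)" using amgm_abs[OF l, of "p x"] by simp
    qed
    also have "\<dots> = l / 2 * integral (cyl2 TYPE('n)) P + V2 / (2 * l)"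
    proof -
      have "integral (cyl2 TYPE('n)) (\<lambda>x. l / 2 * P x + 1 / (2 * l)) = integral (cyl2 TYPE('n)) (\<lambda>x. l / 2 * P x) + integral (cyl2 TYPE('n)) (\<lambda>x. 1 / (2 * l))"
        unfolding cyl2_cbox by (rule integral_add) (use cP in \<open>auto intro!: integrable_continuous continuous_intros intro: continuous_on_subset\<close>)
      thus ?thesis unfolding V2_def by (simp add: cyl2_cbox)
    qed
    also have "\<dots> \<le> l / 2 * E + V2 / (2 * l)"
    proof -
      have "integral (cyl2 TYPE('n)) P \<le> integral UNIV P"
        by (rule integral_subset_le) (use iP cP in \<open>auto simp: P_def cyl2_cbox intro!: integrable_continuous sum_nonneg intro: continuous_on_subset\<close>)
      thus ?thesis using l by (simp add: E_def)
    qed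
    finally show ?thesis .
  qed
  have "V1 \<le> 2 * l * A + l / 2 * E + (V1 + V2) / (2 * l)"
    using base b1 b2 by (simp add: add_divide_distrib)
  also have "(V1 + V2) / (2 * l) = V1 / 2" using V1 V2 by (simp add: l_def field_simps)
  finally have "V1 / 2 \<le> 2 * l * A + l / 2 * E" by simp
  also have "\<dots> \<le> 2 * l * (4 * E) + l / 2 * E" using AE l by simp
  finally have X: "V1 / 2 \<le> 2 * l * (4 * E) + l / 2 * E" .
  have Y: "2 * l * (4 * E) + l / 2 * E = (17 * l * E) / 2" by (simp add: algebra_simps)
  from X Y have "V1 \<le> (17 * l) * E" by linarith
  hence "V1 / (17 * l) \<le> E" using l by (simp add: pos_divide_le_eq mult.commute)
  moreover have "V1 / (17 * l) = c0 TYPE('n)" using V1 by (simp add: c0_def l_def V1_def V2_def power2_eq_square)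
  ultimately show ?thesis by (simp add: E_def P_def)
qed



definition Ek :: "nat \<Rightarrow> real \<Rightarrow> real" where
  "Ek k t = (if 0 < t then inverse t ^ k * exp (- inverse t) else 0)"

lemma E_bound:
  assumes t: "0 < (t::real)"
  shows "inverse t ^ (k + 1) * exp (- inverse t) \<le> real (k + 2) ^ (k + 2) * t"
proof -
  define n where "n = k + 2"
  define x where "x = inverse t"
  have x: "0 < x" using t by (simp add: x_def)
  have n: "0 < n" by (simp add: n_def)
  have "(x / real n) ^ n \<le> (1 + x / real n) ^ n"
    using x n by (intro power_mono) auto
  also have "\<dots> \<le> exp x" by (rule exp_ge_one_plus_x_over_n_power_n) (use x n in auto)
  finally have ex: "(x / real n) ^ n \<le> exp x" .
  have xn0: "0 < (x / real n) ^ n" using x n by simp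
  have "exp (- x) = inverse (exp x)" by (simp add: exp_minus)
  also have "\<dots> \<le> inverse ((x / real n) ^ n)" using ex xn0 by (rule le_imp_inverse_le)
  also have "\<dots> = real n ^ n * t ^ n" using t by (simp add: x_def power_divide power_inverse field_simps)
  finally have e: "exp (- x) \<le> real n ^ n * t ^ n" .
  have "x ^ (k + 1) * exp (- x) \<le> x ^ (k + 1) * (real n ^ n * t ^ n)"
    using e x by (intro mult_left_mono) auto
  also have "\<dots> = real n ^ n * t"
  proof -
    have "x ^ (k + 1) * t ^ n = t" using t by (simp add: x_def n_def power_inverse field_simps)
    thus ?thesis by (simp add: algebra_simps)
  qed
  finally show ?thesis by (simp add: x_def n_def)
qed

lemma Ek_deriv_pos:
  assumes t: "0 < t"
  shows "(Ek k has_real_derivative (- real k * Ek (k + 1) t + Ek (k + 2) t)) (at t)"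
proof -
  have tn: "t \<noteq> 0" using t by simp
  have d1: "((\<lambda>y. inverse y) has_real_derivative - (inverse t ^ Suc (Suc 0))) (at t)"
    by (rule DERIV_inverse[OF tn])
  have d2: "((\<lambda>y. inverse y ^ k) has_real_derivative of_nat k * (- (inverse t ^ Suc (Suc 0)) * inverse t ^ (k - Suc 0))) (at t)"
    by (rule DERIV_power[OF d1])
  have d3: "((\<lambda>y. exp (- inverse y)) has_real_derivative exp (- inverse t) * (- (- (inverse t ^ Suc (Suc 0))))) (at t)"
    by (rule DERIV_fun_exp[OF DERIV_minus[OF d1]])
  have d: "((\<lambda>y. inverse y ^ k * exp (- inverse y)) has_real_derivative
      of_nat k * (- (inverse t ^ Suc (Suc 0)) * inverse t ^ (k - Suc 0)) * exp (- inverse t)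
      + exp (- inverse t) * (- (- (inverse t ^ Suc (Suc 0)))) * inverse t ^ k) (at t)"
    by (rule DERIV_mult[OF d2 d3])
  have eq: "of_nat k * (- (inverse t ^ Suc (Suc 0)) * inverse t ^ (k - Suc 0)) * exp (- inverse t)
      + exp (- inverse t) * (- (- (inverse t ^ Suc (Suc 0)))) * inverse t ^ k = - real k * Ek (k + 1) t + Ek (k + 2) t"
  proof (cases k)
    case 0 thus ?thesis using t by (simp add: Ek_def)
  next
    case (Suc m)
    have "inverse t ^ Suc (Suc 0) * inverse t ^ (k - Suc 0) = inverse t ^ (k + 1)"
      using Suc by (simp add: power_add[symmetric])
    moreover have "inverse t ^ Suc (Suc 0) * inverse t ^ k = inverse t ^ (k + 2)"
      by (simp add: power_add[symmetric])
    ultimately show ?thesis using t unfolding Ek_def by (simp add: algebra_simps)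
  qed
  have "(Ek k has_real_derivative (of_nat k * (- (inverse t ^ Suc (Suc 0)) * inverse t ^ (k - Suc 0)) * exp (- inverse t)
      + exp (- inverse t) * (- (- (inverse t ^ Suc (Suc 0)))) * inverse t ^ k)) (at t)"
    by (rule has_field_derivative_transform_within_open[OF d, of "{0<..}"]) (use t in \<open>auto simp: Ek_def\<close>)
  thus ?thesis unfolding eq .
qed

lemma Ek_deriv_neg:
  assumes t: "t < 0"
  shows "(Ek k has_real_derivative (- real k * Ek (k + 1) t + Ek (k + 2) t)) (at t)"
proof -
  have "((\<lambda>y. 0) has_real_derivative 0) (at t)" by simp
  hence "(Ek k has_real_derivative 0) (at t)"
    by (rule has_field_derivative_transform_within_open[of _ _ _ "{..<0}"]) (use t in \<open>auto simp: Ek_def\<close>)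
  thus ?thesis using t by (simp add: Ek_def)
qed

lemma Ek_deriv_zero: "(Ek k has_real_derivative (- real k * Ek (k + 1) 0 + Ek (k + 2) 0)) (at 0)"
proof -
  define C where "C = real (k + 2) ^ (k + 2)"
  have "((\<lambda>y. (Ek k y - Ek k 0) / (y - 0)) \<longlongrightarrow> 0) (at 0)"
  proof (rule Lim_null_comparison)
    show "((\<lambda>y. C * \<bar>y\<bar>) \<longlongrightarrow> 0) (at (0::real))"
    proof -
      have "((\<lambda>y. C * \<bar>y\<bar>) \<longlongrightarrow> C * \<bar>0::real\<bar>) (at 0)" by (intro tendsto_intros)
      thus ?thesis by simp
    qed
    show "\<forall>\<^sub>F y in at 0. norm ((Ek k y - Ek k 0) / (y - 0)) \<le> C * \<bar>y\<bar>"
    proof (rule always_eventually, intro allI)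
      fix y :: real
      show "norm ((Ek k y - Ek k 0) / (y - 0)) \<le> C * \<bar>y\<bar>"
      proof (cases "0 < y")
        case True
        have "Ek k y / y = inverse y ^ (k + 1) * exp (- inverse y)"
          using True by (simp add: Ek_def divide_inverse)
        moreover have "inverse y ^ (k + 1) * exp (- inverse y) \<le> C * y" unfolding C_def by (rule E_bound[OF True])
        moreover have "0 \<le> inverse y ^ (k + 1) * exp (- inverse y)" using True by simp
        ultimately show ?thesis using True by (simp add: Ek_def)
      next
        case False
        have "0 \<le> C" by (simp add: C_def)
        thus ?thesis using False by (simp add: Ek_def mult_nonneg_nonpos)
      qed
    qed
  qed
  hence "(Ek k has_real_derivative 0) (at 0)" by (simp add: has_field_derivative_iff)
  thus ?thesis by (simp add: Ek_def)
qed

lemma Ek_deriv: "(Ek k has_real_derivative (- real k * Ek (k + 1) t + Ek (k + 2) t)) (at t)"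
  using Ek_deriv_pos Ek_deriv_neg Ek_deriv_zero by (cases "0 < t"; cases "t < 0") auto

lemma Ek_cont: "continuous_on UNIV (Ek k)"
  by (rule continuous_at_imp_continuous_on) (metis DERIV_isCont Ek_deriv)

inductive_set SMc :: "(real^'n::finite \<Rightarrow> real) set" where
  sm_const: "(\<lambda>x. c) \<in> SMc"
| sm_coord: "(\<lambda>x. x $ j) \<in> SMc"
| sm_nsq: "(\<lambda>x. norm x ^ 2) \<in> SMc"
| sm_add: "f \<in> SMc \<Longrightarrow> g \<in> SMc \<Longrightarrow> (\<lambda>x. f x + g x) \<in> SMc"
| sm_mult: "f \<in> SMc \<Longrightarrow> g \<in> SMc \<Longrightarrow> (\<lambda>x. f x * g x) \<in> SMc"
| sm_E: "f \<in> SMc \<Longrightarrow> (\<lambda>x. Ek k (f x)) \<in> SMc"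
| sm_inv: "f \<in> SMc \<Longrightarrow> \<forall>x. 0 < f x \<Longrightarrow> (\<lambda>x. inverse (f x)) \<in> SMc"

lemma LD_cong: "LD i f g \<Longrightarrow> (\<And>x. g x = h x) \<Longrightarrow> LD i f h"
  unfolding LD_def by simp

lemma SMc_props:
  fixes f :: "real^'n::finite \<Rightarrow> real"
  assumes "f \<in> SMc"
  shows "continuous_on UNIV f \<and> (\<forall>i. \<exists>f' \<in> SMc. LD i f f')"
  using assms
proof (induction rule: SMc.induct)
  case (sm_const c)
  have "\<And>i. LD i (\<lambda>x::real^'n. c) (\<lambda>x. 0)" by (rule LD_const)
  moreover have "(\<lambda>x::real^'n. 0) \<in> SMc" by (rule SMc.sm_const)
  ultimately show ?case by (auto intro!: continuous_intros)
next
  case (sm_coord j)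
  have "\<And>i. LD i (\<lambda>x::real^'n. x $ j) (\<lambda>x. if j = i then 1 else 0)" by (rule LD_coord)
  moreover have "\<And>i. (\<lambda>x::real^'n. if j = i then 1 else 0) \<in> SMc" by (rule SMc.sm_const)
  ultimately show ?case by (auto intro!: continuous_intros)
next
  case sm_nsq
  have "\<And>i. (\<lambda>x::real^'n. 2 * x $ i) \<in> SMc" by (intro SMc.sm_mult SMc.sm_const SMc.sm_coord)
  thus ?case using LD_normsq by (auto intro!: continuous_intros)
next
  case (sm_add f g)
  show ?case
  proof (intro conjI allI)
    show "continuous_on UNIV (\<lambda>x. f x + g x)" using sm_add by (auto intro!: continuous_intros)
    fix i
    obtain f' g' where "f' \<in> SMc" "LD i f f'" "g' \<in> SMc" "LD i g g'" using sm_add by blast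
    hence "LD i (\<lambda>x. f x + g x) (\<lambda>x. f' x + g' x)" "(\<lambda>x. f' x + g' x) \<in> SMc"
      by (auto intro: LD_add SMc.sm_add)
    thus "\<exists>h \<in> SMc. LD i (\<lambda>x. f x + g x) h" by blast
  qed
next
  case (sm_mult f g)
  show ?case
  proof (intro conjI allI)
    show "continuous_on UNIV (\<lambda>x. f x * g x)" using sm_mult by (auto intro!: continuous_intros)
    fix i
    obtain f' g' where "f' \<in> SMc" "LD i f f'" "g' \<in> SMc" "LD i g g'" using sm_mult by blast
    hence h: "LD i (\<lambda>x. f x * g x) (\<lambda>x. f' x * g x + f x * g' x)" by (auto intro: LD_mult)
    have fg: "f \<in> SMc" "g \<in> SMc" using sm_mult.hyps by auto
    have "(\<lambda>x. f' x * g x + f x * g' x) \<in> SMc"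
      by (intro SMc.sm_add SMc.sm_mult fg \<open>f' \<in> SMc\<close> \<open>g' \<in> SMc\<close>)
    note h this
    thus "\<exists>h \<in> SMc. LD i (\<lambda>x. f x * g x) h" by blast
  qed
next
  case (sm_E f k)
  show ?case
  proof (intro conjI allI)
    show "continuous_on UNIV (\<lambda>x. Ek k (f x))"
      using sm_E by (intro continuous_on_compose2[OF Ek_cont]) auto
    fix i
    obtain f' where f': "f' \<in> SMc" "LD i f f'" using sm_E by blast
    have "LD i (\<lambda>x. Ek k (f x)) (\<lambda>x. (- real k * Ek (k + 1) (f x) + Ek (k + 2) (f x)) * f' x)"
      unfolding LD_def
    proof
      fix x
      have "((\<lambda>t. f (x + t *\<^sub>R axis i 1)) has_real_derivative f' x) (at 0)" using f' unfolding LD_def by blast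
      from DERIV_chain2[OF Ek_deriv[of k "f (x + 0 *\<^sub>R axis i 1)"] this]
      show "((\<lambda>t. Ek k (f (x + t *\<^sub>R axis i 1))) has_real_derivative (- real k * Ek (k + 1) (f x) + Ek (k + 2) (f x)) * f' x) (at 0)"
        by simp
    qed
    moreover have "(\<lambda>x. (- real k * Ek (k + 1) (f x) + Ek (k + 2) (f x)) * f' x) \<in> SMc"
      by (intro SMc.sm_mult SMc.sm_add SMc.sm_E SMc.sm_const f' sm_E.hyps)
    ultimately show "\<exists>h \<in> SMc. LD i (\<lambda>x. Ek k (f x)) h" by blast
  qed
next
  case (sm_inv f)
  show ?case
  proof (intro conjI allI)
    show "continuous_on UNIV (\<lambda>x. inverse (f x))"
      using sm_inv by (intro continuous_intros) (auto simp: less_imp_neq[symmetric] dest: spec)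
    fix i
    obtain f' where f': "f' \<in> SMc" "LD i f f'" using sm_inv by blast
    have "LD i (\<lambda>x. inverse (f x)) (\<lambda>x. - (inverse (f x) * f' x * inverse (f x)))"
      unfolding LD_def
    proof
      fix x
      have "((\<lambda>t. f (x + t *\<^sub>R axis i 1)) has_real_derivative f' x) (at 0)" using f' unfolding LD_def by blast
      moreover have "f (x + 0 *\<^sub>R axis i 1) \<noteq> 0" using sm_inv.hyps(2) by (metis less_irrefl)
      ultimately show "((\<lambda>t. inverse (f (x + t *\<^sub>R axis i 1))) has_real_derivative - (inverse (f x) * f' x * inverse (f x))) (at 0)"
        using DERIV_inverse' by fastforce
    qed
    moreover have "(\<lambda>x. - (inverse (f x) * f' x * inverse (f x))) = (\<lambda>x. (-1) * (inverse (f x) * (f' x * inverse (f x))))"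
      by auto
    moreover have "(\<lambda>x. (-1) * (inverse (f x) * (f' x * inverse (f x)))) \<in> SMc"
      by (intro SMc.sm_mult SMc.sm_const SMc.sm_inv f' sm_inv.hyps)
    ultimately show "\<exists>h \<in> SMc. LD i (\<lambda>x. inverse (f x)) h" by auto
  qed
qed

lemma LD_pd: "LD i f f' \<Longrightarrow> partial_deriv i f = f'"
  unfolding LD_def partial_deriv_def by (auto intro!: ext DERIV_imp_deriv)

lemma SMc_iter: "f \<in> SMc \<Longrightarrow> iter_partial is f \<in> SMc"
proof (induction "is")
  case Nil thus ?case by simp
next
  case (Cons i "is")
  then obtain f' where f': "f' \<in> SMc" "LD i (iter_partial is f) f'" using SMc_props by blast
  have "partial_deriv i (iter_partial is f) = f'" by (rule LD_pd[OF f'(2)])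
  thus ?case using f'(1) by simp
qed

lemma SMc_smooth: "f \<in> SMc \<Longrightarrow> smooth_fun f"
  unfolding smooth_fun_def
proof (intro allI conjI)
  fix "is" assume f: "f \<in> SMc"
  have g: "iter_partial is f \<in> SMc" by (rule SMc_iter[OF f])
  show "continuous_on UNIV (iter_partial is f)" using SMc_props[OF g] by blast
  fix i x
  obtain f' where "LD i (iter_partial is f) f'" using SMc_props[OF g] by blast
  hence "((\<lambda>t. iter_partial is f (x + t *\<^sub>R axis i 1)) has_real_derivative f' x) (at 0)" by (simp add: LD_def)
  thus "(\<lambda>t. iter_partial is f (x + t *\<^sub>R axis i 1)) differentiable (at 0)"
    using real_differentiable_def by blast
qed

lemma Ek_nonneg: "0 \<le> Ek k t"
  by (simp add: Ek_def)

lemma Ek_pos: "0 < t \<Longrightarrow> 0 < Ek 0 t"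
  by (simp add: Ek_def)

definition bump :: "real^'n::finite \<Rightarrow> real" where
  "bump x = Ek 0 (4 - norm x ^ 2) * inverse (Ek 0 (4 - norm x ^ 2) + Ek 0 (norm x ^ 2 - 1))"

lemma bump_SMc: "bump \<in> SMc"
proof -
  have a: "(\<lambda>x::real^'n. 4 + (-1) * norm x ^ 2) \<in> SMc" by (intro SMc.sm_add SMc.sm_mult SMc.sm_const SMc.sm_nsq)
  have b: "(\<lambda>x::real^'n. norm x ^ 2 + (-1)) \<in> SMc" by (intro SMc.sm_add SMc.sm_const SMc.sm_nsq)
  have pos: "\<forall>x::real^'n. 0 < Ek 0 (4 + (-1) * norm x ^ 2) + Ek 0 (norm x ^ 2 + (-1))"
  proof
    fix x :: "real^'n"
    show "0 < Ek 0 (4 + (-1) * norm x ^ 2) + Ek 0 (norm x ^ 2 + (-1))"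
    proof (cases "norm x ^ 2 < 4")
      case True thus ?thesis using Ek_pos[of "4 + (-1) * norm x ^ 2"] Ek_nonneg[of 0 "norm x ^ 2 + (-1)"] by simp
    next
      case False thus ?thesis using Ek_pos[of "norm x ^ 2 + (-1)"] Ek_nonneg[of 0 "4 + (-1) * norm x ^ 2"] by simp
    qed
  qed
  have M: "(\<lambda>x::real^'n. Ek 0 (4 + (-1) * norm x ^ 2) * inverse (Ek 0 (4 + (-1) * norm x ^ 2) + Ek 0 (norm x ^ 2 + (-1)))) \<in> SMc"
    by (intro SMc.sm_mult SMc.sm_E SMc.sm_inv SMc.sm_add a b pos)
  have Q: "(\<lambda>x::real^'n. Ek 0 (4 + (-1) * norm x ^ 2) * inverse (Ek 0 (4 + (-1) * norm x ^ 2) + Ek 0 (norm x ^ 2 + (-1)))) = bump"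
    by (auto simp: bump_def)
  show ?thesis using M unfolding Q .
qed

lemma bump_one: "norm x < 1 \<Longrightarrow> bump x = 1"
proof -
  assume n: "norm x < 1"
  have "norm x ^ 2 < 1" using n by (simp add: power_less_one_iff abs_less_iff)
  hence "Ek 0 (norm x ^ 2 - 1) = 0" by (simp add: Ek_def)
  moreover have "0 < Ek 0 (4 - norm x ^ 2)" using \<open>norm x ^ 2 < 1\<close> by (intro Ek_pos) simp
  ultimately show ?thesis by (simp add: bump_def)
qed

lemma bump_zero: "4 \<le> norm x ^ 2 \<Longrightarrow> bump x = 0"
  by (simp add: bump_def Ek_def)

lemma bump_cs: "compact_support (bump :: real^'n::finite \<Rightarrow> real)"
  unfolding compact_support_def
proof (subst compact_eq_bounded_closed, intro conjI)
  show "closed (closure {x::real^'n. bump x \<noteq> 0})" by simp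
  have "{x::real^'n. bump x \<noteq> 0} \<subseteq> cball 0 2"
  proof
    fix x :: "real^'n" assume "x \<in> {x. bump x \<noteq> 0}"
    hence "norm x ^ 2 < 4" using bump_zero by force
    hence "norm x ^ 2 < 2 ^ 2" by simp
    hence "norm x < 2" by (rule power2_less_imp_less) simp
    thus "x \<in> cball 0 2" by simp
  qed
  hence "closure {x::real^'n. bump x \<noteq> 0} \<subseteq> cball 0 2" by (simp add: closure_minimal)
  thus "bounded (closure {x::real^'n. bump x \<noteq> 0})" using bounded_cball bounded_subset by blast
qed

lemma cap_set_nonempty:
  "{integral UNIV (\<lambda>x. \<Sum>i\<in>UNIV. (partial_deriv i w x)^2) | w :: real^'n::finite \<Rightarrow> real.
       smooth_fun w \<and> compact_support w \<and> (\<forall>x \<in> flat_disc TYPE('n). w x = 1)} \<noteq> {}"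
proof -
  have "smooth_fun (bump :: real^'n \<Rightarrow> real)" by (rule SMc_smooth[OF bump_SMc])
  moreover have "compact_support (bump :: real^'n \<Rightarrow> real)" by (rule bump_cs)
  moreover have "\<forall>x \<in> flat_disc TYPE('n). bump x = 1" by (auto simp: flat_disc_def bump_one)
  ultimately show ?thesis by blast
qed

lemma kappa_pos:
  assumes "3 \<le> CARD('n::finite)"
  shows "0 < disc_capacity TYPE('n)"
proof -
  have "c0 TYPE('n) \<le> disc_capacity TYPE('n)"
    unfolding disc_capacity_def
  proof (rule cInf_greatest[OF cap_set_nonempty])
    fix y assume "y \<in> {integral UNIV (\<lambda>x. \<Sum>i\<in>UNIV. (partial_deriv i w x)^2) | w :: real^'n \<Rightarrow> real.
       smooth_fun w \<and> compact_support w \<and> (\<forall>x \<in> flat_disc TYPE('n). w x = 1)}"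
    then obtain w :: "real^'n \<Rightarrow> real" where "y = integral UNIV (\<lambda>x. \<Sum>i\<in>UNIV. (partial_deriv i w x)^2)"
      "smooth_fun w" "compact_support w" "\<forall>x \<in> flat_disc TYPE('n). w x = 1" by blast
    thus "c0 TYPE('n) \<le> y" using energy_lower[of w] assms by simp
  qed
  thus ?thesis using c0_pos[where 'n='n] by linarith
qed


theorem lemma1p2:
  fixes m :: nat
  assumes "CARD('n::finite) \<ge> 2"
  shows "bij_betw (Lmap CARD('n) (disc_capacity TYPE('n))) (domL CARD('n) (disc_capacity TYPE('n)) m) (Gset m)
    \<and> (\<forall>p \<in> Gset m. inv_into (domL CARD('n) (disc_capacity TYPE('n)) m)
                       (Lmap CARD('n) (disc_capacity TYPE('n))) p = Linv CARD('n) (disc_capacity TYPE('n)) p)"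
proof -
  have "2 < CARD('n) \<Longrightarrow> 0 < disc_capacity TYPE('n)" using kappa_pos[where 'n='n] by simp
  thus ?thesis by (rule alg_main)
qed

end
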